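(* Let $\Phi_{CC}$ be a PCDS quantum channel on $\mathcal{H}_C=\mathcal{H}_A\oplus\mathcal{H}_B$, with diagonal blocks $\Phi_{AA}$ and $\Phi_{BB}$ (which are quantum channels on $\mathcal{H}_A$ and $\mathcal{H}_B$ respectively). Then $\Phi_{CC}$ is degradable if and only if both $\Phi_{AA}$ and $\Phi_{BB}$ are degradable.
   Context: All Hilbert spaces are finite-dimensional. $\mathcal{H}_C=\mathcal{H}_A\oplus\mathcal{H}_B$ with orthogonal projectors $\hat P_{AA},\hat P_{BB}$ onto the two nontrivial summands, and for an operator $\hat\Theta_{CC}$ on $\mathcal{H}_C$, $\hat\Theta_{XY}:=\hat P_{XX}\hat\Theta_{CC}\hat P_{YY}$. A quantum channel $\Phi_{CC}$ on $\mathcal{H}_C$ is PCDS if there are linear maps $\Phi_{AA},\Phi_{BB},\Phi^{(off)}_{AB},\Phi^{(off)}_{BA}$ (acting on operators $\mathcal{H}_A\to\mathcal{H}_A$, $\mathcal{H}_B\to\mathcal{H}_B$, $\mathcal{H}_B\to\mathcal{H}_A$, $\mathcal{H}_A\to\mathcal{H}_B$ respectively) with $\Phi_{CC}[\hat\Theta_{CC}]=\Phi_{AA}[\hat\Theta_{AA}]+\Phi_{BB}[\hat\Theta_{BB}]+\Phi^{(off)}_{AB}[\hat\Theta_{AB}]+\Phi^{(off)}_{BA}[\hat\Theta_{BA}]$ for all $\hat\Theta_{CC}$; equivalently, it has a Kraus set $\{\hat M^{(j)}_{CC}=\hat M^{(j)}_{AA}+\hat M^{(j)}_{BB}\}_j$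 of block-diagonal operators, and then $\Phi_{XX}[\cdot]=\sum_j\hat M^{(j)}_{XX}\cdot\hat M^{(j)\dagger}_{XX}$ for $X=A,B$. For a channel $\Phi_{XX}$ with Kraus set $\{\hat M^{(j)}\}_j$ and an orthonormal set $\{|j_E\rangle\}$ of an environment space $\mathcal{H}_E$, the complementary channel is $\tilde\Phi_{EX}[\hat\Theta]=\sum_{j,j'}|j_E\rangle\langle j'_E|\,\mathrm{Tr}[\hat M^{(j')\dagger}\hat M^{(j)}\hat\Theta]$ (defined up to a unitary on $E$). $\Phi_{XX}$ is degradable if there exists a quantum channel $\Lambda_{EX}$ from $X$ to $E$ with $\tilde\Phi_{EX}=\Lambda_{EX}\circ\Phi_{XX}$. *)

theory Defs
  imports "Jordan_Normal_Form.Matrix"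
begin

text \<open>Operators on a d-dimensional Hilbert space C^d are complex d x d matrices.
  A (super)operator is modelled as a function on complex matrices; only its
  values on the relevant carrier are meaningful.\<close>

definition dag :: "complex mat \<Rightarrow> complex mat" where
  "dag A = mat (dim_col A) (dim_row A) (\<lambda>(i,j). cnj (A $$ (j,i)))"

definition mtrace :: "complex mat \<Rightarrow> complex" where
  "mtrace A = (\<Sum>i<dim_row A. A $$ (i,i))"

definition msum :: "nat \<Rightarrow> nat \<Rightarrow> complex mat list \<Rightarrow> complex mat" where
  "msum r c Xs = foldr (+) Xs (0\<^sub>m r c)"

definition kraus_set :: "nat \<Rightarrow> nat \<Rightarrow> (complex mat \<Rightarrow> complex mat) \<Rightarrow> complex mat list \<Rightarrow> bool" where
  "kraus_set d1 d2 Phi Ms \<longleftrightarrow>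
     (\<forall>M\<in>set Ms. M \<in> carrier_mat d2 d1) \<and>
     msum d1 d1 (map (\<lambda>M. dag M * M) Ms) = 1\<^sub>m d1 \<and>
     (\<forall>\<rho>\<in>carrier_mat d1 d1. Phi \<rho> = msum d2 d2 (map (\<lambda>M. M * \<rho> * dag M) Ms))"

text \<open>Quantum channel (CPTP map) from C^d1 to C^d2: one with a Kraus representation.\<close>
definition qchannel :: "nat \<Rightarrow> nat \<Rightarrow> (complex mat \<Rightarrow> complex mat) \<Rightarrow> bool" where
  "qchannel d1 d2 Phi \<longleftrightarrow> (\<exists>Ms. kraus_set d1 d2 Phi Ms)"

text \<open>Complementary channel w.r.t. the Kraus set Ms, environment C^(length Ms) with
  standard basis |j_E>: entry (j,j') is Tr[M_{j'}^dag M_j Theta].\<close>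
definition compl_chan :: "complex mat list \<Rightarrow> complex mat \<Rightarrow> complex mat" where
  "compl_chan Ms \<Theta> = mat (length Ms) (length Ms)
      (\<lambda>(j,j'). mtrace (dag (Ms ! j') * (Ms ! j) * \<Theta>))"

definition degradable :: "nat \<Rightarrow> (complex mat \<Rightarrow> complex mat) \<Rightarrow> bool" where
  "degradable d Phi \<longleftrightarrow>
     (\<exists>Ms Lam. kraus_set d d Phi Ms \<and> qchannel d (length Ms) Lam \<and>
        (\<forall>\<Theta>\<in>carrier_mat d d. compl_chan Ms \<Theta> = Lam (Phi \<Theta>)))"

definition lin_on :: "nat \<Rightarrow> nat \<Rightarrow> (complex mat \<Rightarrow> complex mat) \<Rightarrow> bool" where
  "lin_on r c f \<longleftrightarrow> (\<forall>X\<in>carrier_mat r c. \<forall>Y\<in>carrier_mat r c. \<forall>a::complex.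
      f (a \<cdot>\<^sub>m X + Y) = a \<cdot>\<^sub>m f X + f Y)"

text \<open>PCDS decomposition of Phi on C^(n+m) = C^n (+) C^m (A = first n coordinates,
  B = last m coordinates). Theta_XY = P_XX Theta P_YY is identified with its block,
  and Phi_XY maps operators H_Y -> H_X to operators H_Y -> H_X.\<close>
definition pcds :: "nat \<Rightarrow> nat \<Rightarrow> (complex mat \<Rightarrow> complex mat) \<Rightarrow>
    (complex mat \<Rightarrow> complex mat) \<Rightarrow> (complex mat \<Rightarrow> complex mat) \<Rightarrow>
    (complex mat \<Rightarrow> complex mat) \<Rightarrow> (complex mat \<Rightarrow> complex mat) \<Rightarrow> bool" where
  "pcds n m Phi PhiAA PhiAB PhiBA PhiBB \<longleftrightarrow>
     lin_on n n PhiAA \<and> lin_on m m PhiBB \<and> lin_on n m PhiAB \<and> lin_on m n PhiBA \<and>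
     (\<forall>X\<in>carrier_mat n n. PhiAA X \<in> carrier_mat n n) \<and>
     (\<forall>X\<in>carrier_mat m m. PhiBB X \<in> carrier_mat m m) \<and>
     (\<forall>X\<in>carrier_mat n m. PhiAB X \<in> carrier_mat n m) \<and>
     (\<forall>X\<in>carrier_mat m n. PhiBA X \<in> carrier_mat m n) \<and>
     (\<forall>TAA\<in>carrier_mat n n. \<forall>TAB\<in>carrier_mat n m. \<forall>TBA\<in>carrier_mat m n. \<forall>TBB\<in>carrier_mat m m.
        Phi (four_block_mat TAA TAB TBA TBB) =
        four_block_mat (PhiAA TAA) (PhiAB TAB) (PhiBA TBA) (PhiBB TBB))"

end

theory Submission
  imports Defs "Jordan_Normal_Form.Gauss_Jordan_Elimination"
begin

lemma dag_dim[simp]: "dim_row (dag A) = dim_col A" "dim_col (dag A) = dim_row A"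
  by (simp_all add: dag_def)
lemma dag_index[simp]: "i < dim_col A \<Longrightarrow> j < dim_row A \<Longrightarrow> dag A $$ (i,j) = cnj (A $$ (j,i))"
  by (simp add: dag_def)
lemma dag_carrier[simp]: "A \<in> carrier_mat r c \<Longrightarrow> dag A \<in> carrier_mat c r"
  by (intro carrier_matI) (auto dest: carrier_matD)
lemma dag_dag[simp]: "dag (dag A) = A"
  by (rule eq_matI) auto

lemma dag_mult: assumes "A \<in> carrier_mat a b" "B \<in> carrier_mat b c"
  shows "dag (A * B) = dag B * dag A"
  using assms by (intro eq_matI) (auto simp: scalar_prod_def cnj_sum mult.commute)

lemma dag_add: assumes "A \<in> carrier_mat a b" "B \<in> carrier_mat a b"
  shows "dag (A + B) = dag A + dag B"
  using assms by (intro eq_matI) auto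

lemma dag_minus: assumes "A \<in> carrier_mat a b" "B \<in> carrier_mat a b"
  shows "dag (A - B) = dag A - dag B"
  using assms by (intro eq_matI) auto

lemma dag_one[simp]: "dag (1\<^sub>m n) = 1\<^sub>m n"
  by (intro eq_matI) auto

lemma dag_zero[simp]: "dag (0\<^sub>m a b) = 0\<^sub>m b a"
  by (intro eq_matI) auto

lemma dag_smult: "dag (x \<cdot>\<^sub>m A) = cnj x \<cdot>\<^sub>m dag A"
  by (intro eq_matI) auto

lemma mtrace_comm: assumes "A \<in> carrier_mat a b" "B \<in> carrier_mat b a"
  shows "mtrace (A * B) = mtrace (B * A)"
proof -
  have "mtrace (A * B) = (\<Sum>i<a. \<Sum>k<b. A $$ (i,k) * B $$ (k,i))"
    using assms by (simp add: mtrace_def scalar_prod_def atLeast0LessThan)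
  also have "\<dots> = (\<Sum>k<b. \<Sum>i<a. B $$ (k,i) * A $$ (i,k))"
    by (subst sum.swap) (simp add: mult.commute)
  also have "\<dots> = mtrace (B * A)"
    using assms by (simp add: mtrace_def scalar_prod_def atLeast0LessThan)
  finally show ?thesis .
qed

lemma mtrace_add: assumes "A \<in> carrier_mat a a" "B \<in> carrier_mat a a"
  shows "mtrace (A + B) = mtrace A + mtrace B"
  using assms by (simp add: mtrace_def sum.distrib)

lemma mtrace_minus: assumes "A \<in> carrier_mat a a" "B \<in> carrier_mat a a"
  shows "mtrace (A - B) = mtrace A - mtrace B"
  using assms by (simp add: mtrace_def sum_subtractf)

lemma mtrace_one[simp]: "mtrace (1\<^sub>m n) = of_nat n"
  by (simp add: mtrace_def)

lemma msum_Nil[simp]: "msum r c [] = 0\<^sub>m r c"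
  by (simp add: msum_def)
lemma msum_Cons[simp]: "msum r c (X # Xs) = X + msum r c Xs"
  by (simp add: msum_def)

lemma msum_dims[simp]: "dim_row (msum r c Xs) = r" "dim_col (msum r c Xs) = c"
  by (induction Xs) auto

lemma msum_carrier[simp]: "\<forall>X\<in>set Xs. X \<in> carrier_mat r c \<Longrightarrow> msum r c Xs \<in> carrier_mat r c"
  by (induction Xs) auto

lemma msum_index: "\<forall>X\<in>set Xs. X \<in> carrier_mat r c \<Longrightarrow> i < r \<Longrightarrow> j < c \<Longrightarrow>
   msum r c Xs $$ (i,j) = (\<Sum>X\<leftarrow>Xs. X $$ (i,j))"
proof (induction Xs)
  case Nil then show ?case by simp
next
  case (Cons X Xs)
  then have "X \<in> carrier_mat r c" by auto
  with Cons show ?case by simp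
qed

lemma msum_append: "\<forall>X\<in>set Xs. X \<in> carrier_mat r c \<Longrightarrow> \<forall>X\<in>set Ys. X \<in> carrier_mat r c \<Longrightarrow>
   msum r c (Xs @ Ys) = msum r c Xs + msum r c Ys"
proof (induction Xs)
  case Nil then show ?case by simp
next
  case (Cons X Xs)
  have c: "msum r c Xs \<in> carrier_mat r c" "msum r c Ys \<in> carrier_mat r c" "X \<in> carrier_mat r c"
    using Cons.prems by auto
  from Cons show ?case by (simp add: assoc_add_mat[OF c(3) c(1) c(2)])
qed

lemma msum_mult_left: assumes A: "A \<in> carrier_mat a r" and f: "\<forall>x\<in>set xs. f x \<in> carrier_mat r c"
  shows "msum a c (map (\<lambda>x. A * f x) xs) = A * msum r c (map f xs)"
  using f
proof (induction xs)
  case Nil then show ?case using A by simp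
next
  case (Cons x xs)
  have c: "msum r c (map f xs) \<in> carrier_mat r c" "f x \<in> carrier_mat r c" using Cons.prems by auto
  have "msum a c (map (\<lambda>x. A * f x) xs) = A * msum r c (map f xs)" using Cons by simp
  then show ?case by (simp only: list.map msum_Cons mult_add_distrib_mat[OF A c(2) c(1)])
qed

lemma msum_mult_right: assumes A: "A \<in> carrier_mat c b" and f: "\<forall>x\<in>set xs. f x \<in> carrier_mat r c"
  shows "msum r b (map (\<lambda>x. f x * A) xs) = msum r c (map f xs) * A"
  using f
proof (induction xs)
  case Nil then show ?case using A by simp
next
  case (Cons x xs)
  have c: "msum r c (map f xs) \<in> carrier_mat r c" "f x \<in> carrier_mat r c" using Cons.prems by auto
  have "msum r b (map (\<lambda>x. f x * A) xs) = msum r c (map f xs) * A" using Cons by simp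
  then show ?case by (simp only: list.map msum_Cons add_mult_distrib_mat[OF c(2) c(1) A])
qed

lemma mtrace_msum: "\<forall>X\<in>set Xs. X \<in> carrier_mat r r \<Longrightarrow> mtrace (msum r r Xs) = (\<Sum>X\<leftarrow>Xs. mtrace X)"
proof (induction Xs)
  case Nil then show ?case by (simp add: mtrace_def)
next
  case (Cons X Xs)
  have c: "msum r r Xs \<in> carrier_mat r r" "X \<in> carrier_mat r r" using Cons.prems by auto
  from Cons show ?case by (simp only: msum_Cons mtrace_add[OF c(2) c(1)]) simp
qed

lemma msum_concat: "\<forall>Xs\<in>set Xss. \<forall>X\<in>set Xs. X \<in> carrier_mat r c \<Longrightarrow>
   msum r c (concat Xss) = msum r c (map (msum r c) Xss)"
proof (induction Xss)
  case Nil then show ?case by simp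
next
  case (Cons Xs Xss)
  have "msum r c (Xs @ concat Xss) = msum r c Xs + msum r c (concat Xss)"
    using Cons.prems by (intro msum_append) auto
  moreover have "msum r c (concat Xss) = msum r c (map (msum r c) Xss)" using Cons by simp
  ultimately show ?case by (simp only: concat.simps list.map msum_Cons)
qed

lemma msum_cong: "(\<And>x. x \<in> set xs \<Longrightarrow> f x = g x) \<Longrightarrow> msum r c (map f xs) = msum r c (map g xs)"
  by (metis map_cong)


lemma carrier_self: "A \<in> carrier_mat (dim_row A) (dim_col A)" by (intro carrier_matI) auto

lemma carrier_dimI: "dim_row A = r \<Longrightarrow> dim_col A = c \<Longrightarrow> A \<in> carrier_mat r c" by (intro carrier_matI) auto

lemma mult_assoc_dim: fixes A B C :: "complex mat"
  shows "dim_col A = dim_row B \<Longrightarrow> dim_col B = dim_row C \<Longrightarrow> A * B * C = A * (B * C)"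
  by (rule assoc_mult_mat[OF carrier_self carrier_dimI carrier_dimI]) auto

lemma mult_add_dim: fixes A B C :: "complex mat"
  shows "dim_col A = dim_row B \<Longrightarrow> dim_row B = dim_row C \<Longrightarrow> dim_col B = dim_col C \<Longrightarrow>
   A * (B + C) = A * B + A * C"
  by (rule mult_add_distrib_mat[OF carrier_self carrier_dimI carrier_dimI]) auto

lemma add_mult_dim: fixes A B C :: "complex mat"
  shows "dim_row A = dim_row B \<Longrightarrow> dim_col A = dim_col B \<Longrightarrow> dim_col B = dim_row C \<Longrightarrow>
   (A + B) * C = A * C + B * C"
  by (rule add_mult_distrib_mat[OF carrier_self carrier_dimI carrier_dimI]) auto

lemma mult_minus_dim: fixes A B C :: "complex mat"
  shows "dim_col A = dim_row B \<Longrightarrow> dim_row B = dim_row C \<Longrightarrow> dim_col B = dim_col C \<Longrightarrow>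
   A * (B - C) = A * B - A * C"
  by (rule mult_minus_distrib_mat[OF carrier_self carrier_dimI carrier_dimI]) auto

lemma minus_mult_dim: fixes A B C :: "complex mat"
  shows "dim_row A = dim_row B \<Longrightarrow> dim_col A = dim_col B \<Longrightarrow> dim_col B = dim_row C \<Longrightarrow>
   (A - B) * C = A * C - B * C"
  by (rule minus_mult_distrib_mat[OF carrier_self carrier_dimI carrier_dimI]) auto

lemma dag_mult_dim: "dim_col A = dim_row B \<Longrightarrow> dag (A * B) = dag B * dag A"
  by (rule dag_mult[OF carrier_self carrier_dimI]) auto

lemma dag_add_dim: "dim_row A = dim_row B \<Longrightarrow> dim_col A = dim_col B \<Longrightarrow> dag (A + B) = dag A + dag B"
  by (rule dag_add[OF carrier_self carrier_dimI]) auto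

lemma dag_minus_dim: "dim_row A = dim_row B \<Longrightarrow> dim_col A = dim_col B \<Longrightarrow> dag (A - B) = dag A - dag B"
  by (rule dag_minus[OF carrier_self carrier_dimI]) auto

lemma mult_carrier_iff[simp]: "A * B \<in> carrier_mat r c \<longleftrightarrow> dim_row A = r \<and> dim_col B = c"
  unfolding carrier_mat_def by simp

lemma dag_carrier_iff[simp]: "dag A \<in> carrier_mat r c \<longleftrightarrow> dim_col A = r \<and> dim_row A = c"
  unfolding carrier_mat_def by simp

lemmas mat_dim_simps = mult_assoc_dim mult_add_dim add_mult_dim mult_minus_dim minus_mult_dim
  dag_mult_dim dag_add_dim dag_minus_dim

lemma msum_zeros: "msum r c (map (\<lambda>x. 0\<^sub>m r c) xs) = 0\<^sub>m r c" by (induction xs) auto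

lemma msum_add: "\<forall>x\<in>set xs. f x \<in> carrier_mat r c \<Longrightarrow> \<forall>x\<in>set xs. g x \<in> carrier_mat r c \<Longrightarrow>
   msum r c (map (\<lambda>x. f x + g x) xs) = msum r c (map f xs) + msum r c (map g xs)"
proof (induction xs)
  case Nil then show ?case by simp
next
  case (Cons x xs)
  then have ih: "msum r c (map (\<lambda>x. f x + g x) xs) = msum r c (map f xs) + msum r c (map g xs)"
    and fx: "f x \<in> carrier_mat r c" and gx: "g x \<in> carrier_mat r c" by auto
  show ?case unfolding list.map msum_Cons ih
    using fx gx by (intro eq_matI) auto
qed

lemma msum_swap: "\<forall>x\<in>set xs. \<forall>y\<in>set ys. f x y \<in> carrier_mat r c \<Longrightarrow>
  msum r c (map (\<lambda>x. msum r c (map (\<lambda>y. f x y) ys)) xs) = msum r c (map (\<lambda>y. msum r c (map (\<lambda>x. f x y) xs)) ys)"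
proof (induction xs)
  case Nil then show ?case by (simp add: msum_zeros)
next
  case (Cons x xs)
  then have ih: "msum r c (map (\<lambda>x. msum r c (map (\<lambda>y. f x y) ys)) xs) = msum r c (map (\<lambda>y. msum r c (map (\<lambda>x. f x y) xs)) ys)"
    by auto
  have "msum r c (map (\<lambda>y. msum r c (map (\<lambda>x'. f x' y) (x # xs))) ys)
     = msum r c (map (\<lambda>y. f x y + msum r c (map (\<lambda>x'. f x' y) xs)) ys)" by simp
  also have "\<dots> = msum r c (map (\<lambda>y. f x y) ys) + msum r c (map (\<lambda>y. msum r c (map (\<lambda>x'. f x' y) xs)) ys)"
    using Cons.prems by (intro msum_add) auto
  finally show ?case using ih by simp
qed

lemma kraus_set_carrier: "kraus_set d1 d2 Phi Ms \<Longrightarrow> M \<in> set Ms \<Longrightarrow> M \<in> carrier_mat d2 d1"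
  by (auto simp: kraus_set_def)

lemma kraus_set_tp: "kraus_set d1 d2 Phi Ms \<Longrightarrow> msum d1 d1 (map (\<lambda>M. dag M * M) Ms) = 1\<^sub>m d1"
  by (auto simp: kraus_set_def)

lemma kraus_set_eq: "kraus_set d1 d2 Phi Ms \<Longrightarrow> \<rho> \<in> carrier_mat d1 d1 \<Longrightarrow>
  Phi \<rho> = msum d2 d2 (map (\<lambda>M. M * \<rho> * dag M) Ms)"
  by (auto simp: kraus_set_def)

lemma kraus_set_dims: "kraus_set d1 d2 Phi Ms \<Longrightarrow> \<forall>M\<in>set Ms. dim_row M = d2 \<and> dim_col M = d1"
  by (auto simp: kraus_set_def carrier_matD)

lemma kraus_set_image: "kraus_set d1 d2 Phi Ms \<Longrightarrow> \<rho> \<in> carrier_mat d1 d1 \<Longrightarrow> Phi \<rho> \<in> carrier_mat d2 d2"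
  using kraus_set_eq[of d1 d2 Phi Ms \<rho>] kraus_set_dims[of d1 d2 Phi Ms]
  by (auto intro!: msum_carrier simp: carrier_matD)

lemma kraus_comp: assumes K1: "kraus_set a b L1 Ks1" and K2: "kraus_set b c L2 Ks2"
  shows "kraus_set a c (\<lambda>\<rho>. L2 (L1 \<rho>)) (concat (map (\<lambda>K2. map (\<lambda>K1. K2 * K1) Ks1) Ks2))"
proof -
  note c1 = kraus_set_carrier[OF K1] and c2 = kraus_set_carrier[OF K2]
  have car: "\<forall>M\<in>set (concat (map (\<lambda>K2. map (\<lambda>K1. K2 * K1) Ks1) Ks2)). M \<in> carrier_mat c a"
    using c1 c2 by (auto simp: carrier_matD)
  have "msum a a (map (\<lambda>M. dag M * M) (concat (map (\<lambda>K2. map (\<lambda>K1. K2 * K1) Ks1) Ks2)))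
    = msum a a (concat (map (\<lambda>K2. map (\<lambda>K1. dag (K2 * K1) * (K2 * K1)) Ks1) Ks2))"
    by (simp add: map_concat comp_def)
  also have "\<dots> = msum a a (map (\<lambda>K2. msum a a (map (\<lambda>K1. dag (K2 * K1) * (K2 * K1)) Ks1)) Ks2)"
    using c1 c2 by (subst msum_concat) (auto simp: comp_def)
  also have "\<dots> = msum a a (map (\<lambda>K1. msum a a (map (\<lambda>K2. dag (K2 * K1) * (K2 * K1)) Ks2)) Ks1)"
    using c1 c2 by (intro msum_swap) auto
  also have "\<dots> = msum a a (map (\<lambda>K1. dag K1 * K1) Ks1)"
  proof (rule msum_cong)
    fix K1 assume k1: "K1 \<in> set Ks1"
    have "msum a a (map (\<lambda>K2. dag (K2 * K1) * (K2 * K1)) Ks2)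
       = msum a a (map (\<lambda>K2. dag K1 * (dag K2 * K2 * K1)) Ks2)"
      using c1[OF k1] c2 by (intro msum_cong) (auto dest: c1 c2 simp: mat_dim_simps carrier_matD)
    also have "\<dots> = dag K1 * msum b a (map (\<lambda>K2. dag K2 * K2 * K1) Ks2)"
      using c1[OF k1] c2 by (intro msum_mult_left) auto
    also have "msum b a (map (\<lambda>K2. dag K2 * K2 * K1) Ks2) = msum b b (map (\<lambda>K2. dag K2 * K2) Ks2) * K1"
      using c1[OF k1] c2 by (intro msum_mult_right) auto
    also have "\<dots> = K1" using kraus_set_tp[OF K2] c1[OF k1] by simp
    finally show "msum a a (map (\<lambda>K2. dag (K2 * K1) * (K2 * K1)) Ks2) = dag K1 * K1" .
  qed
  also have "\<dots> = 1\<^sub>m a" by (rule kraus_set_tp[OF K1])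
  finally have tp: "msum a a (map (\<lambda>M. dag M * M) (concat (map (\<lambda>K2. map (\<lambda>K1. K2 * K1) Ks1) Ks2))) = 1\<^sub>m a" .
  have eq: "L2 (L1 \<rho>) = msum c c (map (\<lambda>M. M * \<rho> * dag M) (concat (map (\<lambda>K2. map (\<lambda>K1. K2 * K1) Ks1) Ks2)))"
    if r: "\<rho> \<in> carrier_mat a a" for \<rho>
  proof -
    have L1r: "L1 \<rho> \<in> carrier_mat b b" by (rule kraus_set_image[OF K1 r])
    have "L2 (L1 \<rho>) = msum c c (map (\<lambda>K2. K2 * L1 \<rho> * dag K2) Ks2)"
      by (rule kraus_set_eq[OF K2 L1r])
    also have "\<dots> = msum c c (map (\<lambda>K2. msum c c (map (\<lambda>K1. K2 * K1 * \<rho> * dag (K2 * K1)) Ks1)) Ks2)"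
    proof (rule msum_cong)
      fix K2 assume k2: "K2 \<in> set Ks2"
      have "K2 * L1 \<rho> * dag K2 = K2 * (msum b b (map (\<lambda>K1. K1 * \<rho> * dag K1) Ks1) * dag K2)"
        using kraus_set_eq[OF K1 r] c2[OF k2] c1 r by (auto dest: c1 c2 simp: mat_dim_simps carrier_matD)
      also have "msum b b (map (\<lambda>K1. K1 * \<rho> * dag K1) Ks1) * dag K2 = msum b c (map (\<lambda>K1. K1 * \<rho> * dag K1 * dag K2) Ks1)"
        using c1 c2[OF k2] r by (intro msum_mult_right[symmetric]) auto
      also have "K2 * \<dots> = msum c c (map (\<lambda>K1. K2 * (K1 * \<rho> * dag K1 * dag K2)) Ks1)"
        using c1 c2[OF k2] r by (intro msum_mult_left[symmetric]) auto
      also have "\<dots> = msum c c (map (\<lambda>K1. K2 * K1 * \<rho> * dag (K2 * K1)) Ks1)"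
        using c1 c2[OF k2] r by (intro msum_cong) (auto dest: c1 c2 simp: mat_dim_simps carrier_matD)
      finally show "K2 * L1 \<rho> * dag K2 = msum c c (map (\<lambda>K1. K2 * K1 * \<rho> * dag (K2 * K1)) Ks1)" .
    qed
    also have "\<dots> = msum c c (concat (map (\<lambda>K2. map (\<lambda>K1. K2 * K1 * \<rho> * dag (K2 * K1)) Ks1) Ks2))"
      using c1 c2 r by (subst msum_concat) (auto simp: comp_def)
    also have "\<dots> = msum c c (map (\<lambda>M. M * \<rho> * dag M) (concat (map (\<lambda>K2. map (\<lambda>K1. K2 * K1) Ks1) Ks2)))"
      by (simp add: map_concat comp_def)
    finally show ?thesis .
  qed
  show ?thesis unfolding kraus_set_def using car tp eq by blast
qed

lemma qchannel_comp: "qchannel a b L1 \<Longrightarrow> qchannel b c L2 \<Longrightarrow> qchannel a c (\<lambda>\<rho>. L2 (L1 \<rho>))"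
  unfolding qchannel_def using kraus_comp by blast

lemma kraus_isometry: assumes P: "P \<in> carrier_mat d k" and iso: "dag P * P = 1\<^sub>m k"
  shows "kraus_set k d (\<lambda>\<rho>. P * \<rho> * dag P) [P]"
  using P iso unfolding kraus_set_def by (auto simp: carrier_matD)

lemma trace_NNdag: assumes N: "N \<in> carrier_mat a b"
  shows "mtrace (N * dag N) = of_real (\<Sum>i<a. \<Sum>j<b. (cmod (N $$ (i,j)))\<^sup>2)"
proof -
  have "mtrace (N * dag N) = (\<Sum>i<a. \<Sum>j<b. N $$ (i,j) * cnj (N $$ (i,j)))"
    using N by (simp add: mtrace_def scalar_prod_def atLeast0LessThan carrier_matD)
  also have "\<dots> = of_real (\<Sum>i<a. \<Sum>j<b. (cmod (N $$ (i,j)))\<^sup>2)"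
    by (simp only: complex_norm_square[symmetric] of_real_sum)
  finally show ?thesis .
qed

lemma zero_from_trace: assumes N: "N \<in> carrier_mat a b" and t: "(\<Sum>i<a. \<Sum>j<b. (cmod (N $$ (i,j)))\<^sup>2) = 0"
  shows "N = 0\<^sub>m a b"
proof (rule eq_matI)
  fix i j assume i: "i < dim_row (0\<^sub>m a b)" and j: "j < dim_col (0\<^sub>m a b)"
  from t have "\<forall>i\<in>{..<a}. (\<Sum>j<b. (cmod (N $$ (i,j)))\<^sup>2) = 0"
    by (subst (asm) sum_nonneg_eq_0_iff) (auto intro: sum_nonneg)
  then have "\<forall>i\<in>{..<a}. \<forall>j\<in>{..<b}. (cmod (N $$ (i,j)))\<^sup>2 = 0"
    by (auto simp: sum_nonneg_eq_0_iff)
  with i j show "N $$ (i,j) = 0\<^sub>m a b $$ (i,j)" by auto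
qed (use N in auto)

lemma msum_psd_zero: assumes car: "\<forall>N\<in>set Ns. N \<in> carrier_mat a b"
  and z: "msum a a (map (\<lambda>N. N * dag N) Ns) = 0\<^sub>m a a"
  shows "\<forall>N\<in>set Ns. N = 0\<^sub>m a b"
proof -
  let ?s = "\<lambda>N. (\<Sum>i<a. \<Sum>j<b. (cmod (N $$ (i,j)))\<^sup>2)"
  have "mtrace (msum a a (map (\<lambda>N. N * dag N) Ns)) = (\<Sum>N\<leftarrow>Ns. mtrace (N * dag N))"
    using car by (subst mtrace_msum) (auto simp: comp_def carrier_matD)
  also have "\<dots> = (\<Sum>N\<leftarrow>Ns. of_real (?s N))"
  proof (intro arg_cong[where f = sum_list] map_cong refl)
    fix x assume "x \<in> set Ns"
    then have "x \<in> carrier_mat a b" using car by auto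
    then show "mtrace (x * dag x) = of_real (?s x)" by (rule trace_NNdag)
  qed
  also have "\<dots> = of_real (\<Sum>N\<leftarrow>Ns. ?s N)"
    by (induction Ns) auto
  finally have "of_real (\<Sum>N\<leftarrow>Ns. ?s N) = (0::complex)" using z by (simp add: mtrace_def)
  then have "(\<Sum>N\<leftarrow>Ns. ?s N) = 0" by simp
  then have "\<forall>x\<in>set (map ?s Ns). x = 0"
    by (subst (asm) sum_list_nonneg_eq_0_iff) (auto intro!: sum_nonneg)
  then show ?thesis using car zero_from_trace by auto
qed

lemma minus_zero_eq: fixes A B :: "complex mat"
  assumes "A \<in> carrier_mat r c" "B \<in> carrier_mat r c" "A - B = 0\<^sub>m r c" shows "A = B"
proof -
  have d: "dim_row A = r" "dim_col A = c" "dim_row B = r" "dim_col B = c" using assms by auto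
  show ?thesis
  proof (rule eq_matI)
    fix i j assume ij: "i < dim_row B" "j < dim_col B"
    then have "(A - B) $$ (i,j) = 0" using assms(3) d by simp
    then show "A $$ (i,j) = B $$ (i,j)" using ij d by simp
  qed (use d in auto)
qed

context
  fixes d k :: nat and P :: "complex mat" and Phi Psi :: "complex mat \<Rightarrow> complex mat" and Ms :: "complex mat list"
  assumes P: "P \<in> carrier_mat d k" and iso: "dag P * P = 1\<^sub>m k"
    and K: "kraus_set d d Phi Ms"
    and Psi: "\<And>\<rho>. \<rho> \<in> carrier_mat k k \<Longrightarrow> Psi \<rho> \<in> carrier_mat k k"
    and comm: "\<And>\<rho>. \<rho> \<in> carrier_mat k k \<Longrightarrow> Phi (P * \<rho> * dag P) = P * Psi \<rho> * dag P"
begin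

lemma Pd[simp]: "dim_row P = d" "dim_col P = k" using P by auto

lemma iso_r: "dag P * (P * X) = X" if "dim_row X = k" for X
proof -
  have "dag P * (P * X) = (dag P * P) * X" using that by (simp add: mat_dim_simps)
  then show ?thesis using iso that by simp
qed

lemma Kd: "M \<in> set Ms \<Longrightarrow> dim_row M = d \<and> dim_col M = d"
  using kraus_set_dims[OF K] by auto

lemma sub_block: assumes M: "M \<in> set Ms" shows "P * (dag P * (M * P)) = M * P"
proof -
  define Q where "Q = 1\<^sub>m d - P * dag P"
  have Qd[simp]: "dim_row Q = d" "dim_col Q = d" by (auto simp: Q_def)
  have QP: "Q * P = 0\<^sub>m d k"
  proof -
    have "Q * P = P - P * (dag P * P)" unfolding Q_def by (simp add: mat_dim_simps)
    also have "\<dots> = 0\<^sub>m d k" using iso by (intro eq_matI) auto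
    finally show ?thesis .
  qed
  have one: "P * 1\<^sub>m k * dag P \<in> carrier_mat d d" by simp
  have "msum d d (map (\<lambda>M. M * (P * 1\<^sub>m k * dag P) * dag M) Ms) = P * Psi (1\<^sub>m k) * dag P"
    using kraus_set_eq[OF K one] comm[of "1\<^sub>m k"] by simp
  then have "Q * msum d d (map (\<lambda>M. M * (P * 1\<^sub>m k * dag P) * dag M) Ms) * dag Q = Q * (P * Psi (1\<^sub>m k) * dag P) * dag Q"
    by simp
  also have "Q * (P * Psi (1\<^sub>m k) * dag P) * dag Q = (Q * P) * (Psi (1\<^sub>m k) * dag P * dag Q)"
    using Psi[of "1\<^sub>m k"] by (simp add: mat_dim_simps carrier_matD)
  also have "\<dots> = 0\<^sub>m d d" unfolding QP using Psi[of "1\<^sub>m k"] by (simp add: carrier_matD)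
  also have "Q * msum d d (map (\<lambda>M. M * (P * 1\<^sub>m k * dag P) * dag M) Ms) * dag Q
     = msum d d (map (\<lambda>M. (Q * M * P) * dag (Q * M * P)) Ms)"
  proof -
    have "Q * msum d d (map (\<lambda>M. M * (P * 1\<^sub>m k * dag P) * dag M) Ms) = msum d d (map (\<lambda>M. Q * (M * (P * 1\<^sub>m k * dag P) * dag M)) Ms)"
      using Kd by (intro msum_mult_left[symmetric]) auto
    moreover have "msum d d (map (\<lambda>M. Q * (M * (P * 1\<^sub>m k * dag P) * dag M)) Ms) * dag Q
       = msum d d (map (\<lambda>M. Q * (M * (P * 1\<^sub>m k * dag P) * dag M) * dag Q) Ms)"
      using Kd by (intro msum_mult_right[symmetric]) auto
    moreover have "msum d d (map (\<lambda>M. Q * (M * (P * 1\<^sub>m k * dag P) * dag M) * dag Q) Ms)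
       = msum d d (map (\<lambda>M. (Q * M * P) * dag (Q * M * P)) Ms)"
      by (rule msum_cong) (auto dest!: Kd simp: mat_dim_simps)
    ultimately show ?thesis by simp
  qed
  finally have "msum d d (map (\<lambda>N. N * dag N) (map (\<lambda>M. Q * M * P) Ms)) = 0\<^sub>m d d"
    by (simp add: comp_def)
  then have "\<forall>N\<in>set (map (\<lambda>M. Q * M * P) Ms). N = 0\<^sub>m d k"
    by (intro msum_psd_zero) (auto dest!: Kd)
  then have e1: "Q * M * P = 0\<^sub>m d k" using M by auto
  have e2: "Q * M * P = M * P - P * (dag P * (M * P))"
    unfolding Q_def using Kd[OF M] by (simp add: mat_dim_simps)
  have "M * P - P * (dag P * (M * P)) = 0\<^sub>m d k" using e1 unfolding e2 .
  then have "M * P = P * (dag P * (M * P))"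
    by (rule minus_zero_eq[rotated 2]) (use Kd[OF M] in auto)
  then show ?thesis by (rule sym)
qed

lemma sub_kraus: "kraus_set k k Psi (map (\<lambda>M. dag P * M * P) Ms)"
proof -
  have car: "\<forall>M\<in>set (map (\<lambda>M. dag P * M * P) Ms). M \<in> carrier_mat k k" by (auto dest!: Kd)
  have "msum k k (map (\<lambda>A. dag A * A) (map (\<lambda>M. dag P * M * P) Ms))
      = msum k k (map (\<lambda>M. dag P * (dag M * M * P)) Ms)"
  proof -
    have "\<And>M. M \<in> set Ms \<Longrightarrow> dag (dag P * M * P) * (dag P * M * P) = dag P * (dag M * M * P)"
    proof -
      fix M assume M: "M \<in> set Ms"
      have "dag (dag P * M * P) * (dag P * M * P) = dag P * (dag M * (P * (dag P * (M * P))))"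
        using Kd[OF M] by (simp add: mat_dim_simps)
      also have "\<dots> = dag P * (dag M * M * P)" using sub_block[OF M] Kd[OF M] by (simp add: mat_dim_simps)
      finally show "dag (dag P * M * P) * (dag P * M * P) = dag P * (dag M * M * P)" .
    qed
    then show ?thesis unfolding map_map comp_def by (rule msum_cong)
  qed
  also have "\<dots> = dag P * msum d k (map (\<lambda>M. dag M * M * P) Ms)"
    by (intro msum_mult_left) (auto dest!: Kd)
  also have "msum d k (map (\<lambda>M. dag M * M * P) Ms) = msum d d (map (\<lambda>M. dag M * M) Ms) * P"
    by (intro msum_mult_right) (auto dest!: Kd)
  also have "\<dots> = P" using kraus_set_tp[OF K] by simp
  finally have tp: "msum k k (map (\<lambda>A. dag A * A) (map (\<lambda>M. dag P * M * P) Ms)) = 1\<^sub>m k" using iso by simp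
  have eq: "Psi \<rho> = msum k k (map (\<lambda>A. A * \<rho> * dag A) (map (\<lambda>M. dag P * M * P) Ms))"
    if r: "\<rho> \<in> carrier_mat k k" for \<rho>
  proof -
    have r': "P * \<rho> * dag P \<in> carrier_mat d d" using r by (simp add: carrier_matD)
    have "Psi \<rho> = dag P * (P * Psi \<rho> * dag P) * P"
    proof -
      have "dag P * (P * Psi \<rho> * dag P) * P = (dag P * P) * Psi \<rho> * (dag P * P)"
        using Psi[OF r] by (simp add: mat_dim_simps carrier_matD)
      then show ?thesis using iso Psi[OF r] by (simp add: carrier_matD)
    qed
    also have "\<dots> = dag P * msum d d (map (\<lambda>M. M * (P * \<rho> * dag P) * dag M) Ms) * P"
      using comm[OF r] kraus_set_eq[OF K r'] by simp
    also have "\<dots> = msum k k (map (\<lambda>M. dag P * (M * (P * \<rho> * dag P) * dag M) * P) Ms)"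
    proof -
      have "dag P * msum d d (map (\<lambda>M. M * (P * \<rho> * dag P) * dag M) Ms) = msum k d (map (\<lambda>M. dag P * (M * (P * \<rho> * dag P) * dag M)) Ms)"
        using r by (intro msum_mult_left[symmetric]) (auto dest!: Kd simp: carrier_matD)
      moreover have "msum k d (map (\<lambda>M. dag P * (M * (P * \<rho> * dag P) * dag M)) Ms) * P = msum k k (map (\<lambda>M. dag P * (M * (P * \<rho> * dag P) * dag M) * P) Ms)"
        using r by (intro msum_mult_right[symmetric]) (auto dest!: Kd simp: carrier_matD)
      ultimately show ?thesis by simp
    qed
    also have "\<dots> = msum k k (map (\<lambda>A. A * \<rho> * dag A) (map (\<lambda>M. dag P * M * P) Ms))"
      using r by (simp add: comp_def, intro msum_cong) (auto dest!: Kd simp: mat_dim_simps carrier_matD)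
    finally show ?thesis .
  qed
  show ?thesis unfolding kraus_set_def using car tp eq by blast
qed

lemma sub_compl: assumes th: "\<theta> \<in> carrier_mat k k"
  shows "compl_chan (map (\<lambda>M. dag P * M * P) Ms) \<theta> = compl_chan Ms (P * \<theta> * dag P)"
proof (rule eq_matI)
  fix j j' assume j: "j < dim_row (compl_chan Ms (P * \<theta> * dag P))" and j': "j' < dim_col (compl_chan Ms (P * \<theta> * dag P))"
  then have jl: "j < length Ms" "j' < length Ms" by (auto simp: compl_chan_def)
  then have M: "Ms ! j \<in> set Ms" "Ms ! j' \<in> set Ms" by auto
  have "mtrace (dag (dag P * Ms ! j' * P) * (dag P * Ms ! j * P) * \<theta>)
      = mtrace (dag P * (dag (Ms ! j') * (P * (dag P * (Ms ! j * P))) * \<theta>))"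
    using Kd[OF M(1)] Kd[OF M(2)] th by (simp add: mat_dim_simps carrier_matD)
  also have "\<dots> = mtrace (dag P * (dag (Ms ! j') * (Ms ! j * P) * \<theta>))"
    using sub_block[OF M(1)] by simp
  also have "\<dots> = mtrace ((dag (Ms ! j') * (Ms ! j * P) * \<theta>) * dag P)"
    using Kd[OF M(1)] Kd[OF M(2)] th by (intro mtrace_comm[of _ k d]) (auto simp: carrier_matD)
  also have "\<dots> = mtrace (dag (Ms ! j') * Ms ! j * (P * \<theta> * dag P))"
    using Kd[OF M(1)] Kd[OF M(2)] th by (simp add: mat_dim_simps carrier_matD)
  finally show "compl_chan (map (\<lambda>M. dag P * M * P) Ms) \<theta> $$ (j, j') = compl_chan Ms (P * \<theta> * dag P) $$ (j, j')"
    using jl by (simp add: compl_chan_def)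
qed (auto simp: compl_chan_def)

end

lemma degradable_sub:
  assumes P: "P \<in> carrier_mat d k" and iso: "dag P * P = 1\<^sub>m k"
    and Psi: "\<And>\<rho>. \<rho> \<in> carrier_mat k k \<Longrightarrow> Psi \<rho> \<in> carrier_mat k k"
    and comm: "\<And>\<rho>. \<rho> \<in> carrier_mat k k \<Longrightarrow> Phi (P * \<rho> * dag P) = P * Psi \<rho> * dag P"
    and deg: "degradable d Phi"
  shows "degradable k Psi"
proof -
  obtain Ms Lam where K: "kraus_set d d Phi Ms" and L: "qchannel d (length Ms) Lam"
    and eq: "\<forall>\<Theta>\<in>carrier_mat d d. compl_chan Ms \<Theta> = Lam (Phi \<Theta>)"
    using deg unfolding degradable_def by blast
  have L': "qchannel k (length Ms) (\<lambda>X. Lam (P * X * dag P))"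
    using qchannel_comp[OF _ L] kraus_isometry[OF P iso] unfolding qchannel_def by blast
  have "compl_chan (map (\<lambda>M. dag P * M * P) Ms) \<theta> = Lam (P * Psi \<theta> * dag P)" if th: "\<theta> \<in> carrier_mat k k" for \<theta>
  proof -
    have "compl_chan (map (\<lambda>M. dag P * M * P) Ms) \<theta> = compl_chan Ms (P * \<theta> * dag P)"
      by (rule sub_compl[OF P iso K Psi comm th])
    also have "\<dots> = Lam (Phi (P * \<theta> * dag P))" using eq th P by (simp add: carrier_matD)
    also have "\<dots> = Lam (P * Psi \<theta> * dag P)" using comm[OF th] by simp
    finally show ?thesis .
  qed
  then show ?thesis unfolding degradable_def
    using sub_kraus[OF P iso K Psi comm] L' by (intro exI[of _ "map (\<lambda>M. dag P * M * P) Ms"] exI[of _ "\<lambda>X. Lam (P * X * dag P)"]) auto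
qed

lemma ginv_exists: fixes J :: "complex mat" assumes J: "J \<in> carrier_mat N N"
  shows "\<exists>K0 \<in> carrier_mat N N. J * K0 * J = J"
proof -
  obtain C where gC: "gauss_jordan_single J = C" by simp
  note g = gauss_jordan_single[OF J gC]
  from g(4) obtain P Q where CPJ: "C = P * J" and P: "P \<in> carrier_mat N N" and Q: "Q \<in> carrier_mat N N"
    and PQ: "P * Q = 1\<^sub>m N" and QP: "Q * P = 1\<^sub>m N" by blast
  have C: "C \<in> carrier_mat N N" by (rule g(2))
  from g(3) obtain f where pf: "pivot_fun C f N" unfolding row_echelon_form_def using C by auto
  have dC: "dim_row C = N" "dim_col C = N" using C by auto
  note pD = pivot_funD[OF dC(1) pf]
  define K1 :: "complex mat" where "K1 = mat N N (\<lambda>(j,i). if f i < N \<and> j = f i then 1 else 0)"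
  have K1: "K1 \<in> carrier_mat N N" by (simp add: K1_def)
  have CK1: "(C * K1) $$ (u,i) = (if f i < N \<and> u = i then 1 else 0)" if u: "u < N" and i: "i < N" for u i
  proof -
    have "(C * K1) $$ (u,i) = (\<Sum>j\<in>{0..<N}. C $$ (u,j) * (if f i < N \<and> j = f i then 1 else 0))"
      using u i dC by (simp add: K1_def scalar_prod_def)
    also have "\<dots> = (if f i < N then C $$ (u, f i) else 0)"
    proof (cases "f i < N")
      case True
      have "(\<Sum>j\<in>{0..<N}. C $$ (u,j) * (if f i < N \<and> j = f i then 1 else 0)) = (\<Sum>j\<in>{0..<N}. if j = f i then C $$ (u,j) else 0)"
        using True by (intro sum.cong) auto
      also have "\<dots> = C $$ (u, f i)" using True by (simp add: sum.delta')
      finally show ?thesis using True by simp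
    qed simp
    also have "\<dots> = (if f i < N \<and> u = i then 1 else 0)"
      using pD(4)[OF i] pD(5)[OF i _ u] by auto
    finally show ?thesis .
  qed
  have CK1C: "C * K1 * C = C"
  proof (rule eq_matI)
    fix u j assume u: "u < dim_row C" and j: "j < dim_col C"
    have "(C * K1 * C) $$ (u,j) = (\<Sum>i\<in>{0..<N}. (C * K1) $$ (u,i) * C $$ (i,j))"
      using u j dC K1 by (simp add: scalar_prod_def)
    also have "\<dots> = (\<Sum>i\<in>{0..<N}. if i = u then (if f u < N then C $$ (u,j) else 0) else 0)"
      using u dC by (intro sum.cong) (auto simp: CK1)
    also have "\<dots> = (if f u < N then C $$ (u,j) else 0)" using u dC by (simp add: sum.delta')
    also have "\<dots> = C $$ (u,j)"
    proof -
      have "f u \<le> N" using pD(1) u dC by auto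
      moreover have "\<not> f u < N \<Longrightarrow> C $$ (u,j) = 0" using pD(2)[of u j] u j dC \<open>f u \<le> N\<close> by auto
      ultimately show ?thesis by auto
    qed
    finally show "(C * K1 * C) $$ (u,j) = C $$ (u,j)" .
  qed (use K1 dC in auto)
  have JQC: "J = Q * C"
  proof -
    have "Q * C = (Q * P) * J" unfolding CPJ using P Q J by (simp add: mat_dim_simps carrier_matD)
    then show ?thesis using QP J by (simp add: carrier_matD)
  qed
  have "J * (K1 * P) * J = Q * (C * K1 * C)"
  proof -
    have "J * (K1 * P) * J = J * (K1 * (P * J))" using P J K1 by (simp add: mat_dim_simps carrier_matD)
    also have "\<dots> = Q * C * (K1 * C)" by (simp only: CPJ[symmetric], subst JQC, rule refl)
    also have "\<dots> = Q * (C * K1 * C)" using C Q K1 by (simp add: mat_dim_simps carrier_matD)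
    finally show ?thesis .
  qed
  also have "\<dots> = J" using CK1C JQC by simp
  finally show ?thesis using K1 P by (intro bexI[of _ "K1 * P"]) (auto simp: carrier_matD)
qed

definition vecm :: "nat \<Rightarrow> complex mat list \<Rightarrow> complex mat" where
  "vecm k Ms = mat (length Ms) (k*k) (\<lambda>(l,x). Ms ! l $$ (x div k, x mod k))"

definition Wm :: "nat \<Rightarrow> complex mat \<Rightarrow> complex mat" where
  "Wm k \<theta> = mat (k*k) (k*k) (\<lambda>(y,x). if x div k = y div k then \<theta> $$ (y mod k, x mod k) else 0)"

lemma vecm_dims[simp]: "dim_row (vecm k Ms) = length Ms" "dim_col (vecm k Ms) = k * k"
  by (simp_all add: vecm_def)

lemma Wm_dims[simp]: "dim_row (Wm k \<theta>) = k * k" "dim_col (Wm k \<theta>) = k * k"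
  by (simp_all add: Wm_def)

lemma sum_divmod: fixes f :: "nat \<Rightarrow> 'a::comm_monoid_add"
  shows "(\<Sum>x<k*k. f x) = (\<Sum>a<k. \<Sum>b<k. f (a*k+b))"
proof -
  have "(\<Sum>x<k*k. f x) = (\<Sum>a<k. sum f {a*k..<a*k+k})"
    by (rule sum.nat_group[symmetric])
  also have "\<dots> = (\<Sum>a<k. \<Sum>b<k. f (a*k+b))"
  proof (rule sum.cong[OF refl])
    fix a
    have "sum f {a*k..<a*k+k} = sum f {0 + a*k..<k + a*k}" by (simp add: add.commute)
    also have "\<dots> = (\<Sum>b\<in>{0..<k}. f (b + a*k))" by (rule sum.shift_bounds_nat_ivl)
    finally show "sum f {a*k..<a*k+k} = (\<Sum>b<k. f (a*k+b))" by (simp add: atLeast0LessThan add.commute)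
  qed
  finally show ?thesis .
qed

lemma divmod_k: "b < (k::nat) \<Longrightarrow> (a*k+b) div k = a" "b < (k::nat) \<Longrightarrow> (a*k+b) mod k = b"
  by auto

lemma divmod_lt: "x < k*k \<Longrightarrow> x div k < (k::nat)" "x < k*k \<Longrightarrow> x mod k < (k::nat)"
  by (auto simp: less_mult_imp_div_less) (metis mod_less_divisor mult_eq_0_iff neq0_conv not_less_zero)

lemma divmod_lt2: "a < k \<Longrightarrow> b < k \<Longrightarrow> a*k+b < (k::nat)*k"
proof -
  assume "a < k" "b < k"
  then have "a*k+b < a*k+k" by simp
  also have "\<dots> = (a+1)*k" by simp
  also have "\<dots> \<le> k*k" using \<open>a<k\<close> by (intro mult_right_mono) auto
  finally show ?thesis .
qed

lemma VW_entry: assumes M: "\<forall>M\<in>set Ms. M \<in> carrier_mat k k" and th: "\<theta> \<in> carrier_mat k k"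
  and l: "l < length Ms" and x: "x < k*k"
  shows "(vecm k Ms * Wm k \<theta>) $$ (l,x) = (\<Sum>b<k. Ms!l $$ (x div k, b) * \<theta> $$ (b, x mod k))"
proof -
  have "(vecm k Ms * Wm k \<theta>) $$ (l,x) = (\<Sum>y<k*k. vecm k Ms $$ (l,y) * Wm k \<theta> $$ (y,x))"
    using l x by (simp add: scalar_prod_def atLeast0LessThan)
  also have "\<dots> = (\<Sum>y<k*k. Ms!l $$ (y div k, y mod k) * (if x div k = y div k then \<theta> $$ (y mod k, x mod k) else 0))"
    using l x by (intro sum.cong) (auto simp: vecm_def Wm_def)
  also have "\<dots> = (\<Sum>a<k. \<Sum>b<k. Ms!l $$ (a, b) * (if x div k = a then \<theta> $$ (b, x mod k) else 0))"
    by (subst sum_divmod) (intro sum.cong refl, simp)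
  also have "\<dots> = (\<Sum>a<k. if a = x div k then (\<Sum>b<k. Ms!l $$ (a, b) * \<theta> $$ (b, x mod k)) else 0)"
    by (intro sum.cong refl) auto
  also have "\<dots> = (\<Sum>b<k. Ms!l $$ (x div k, b) * \<theta> $$ (b, x mod k))"
    using divmod_lt[OF x] by (simp add: sum.delta')
  finally show ?thesis .
qed

lemma vec_compl: assumes M: "\<forall>M\<in>set Ms. M \<in> carrier_mat k k" and th: "\<theta> \<in> carrier_mat k k"
  shows "compl_chan Ms \<theta> = vecm k Ms * Wm k \<theta> * dag (vecm k Ms)"
proof (rule eq_matI)
  fix l l' assume l: "l < dim_row (vecm k Ms * Wm k \<theta> * dag (vecm k Ms))"
    and l': "l' < dim_col (vecm k Ms * Wm k \<theta> * dag (vecm k Ms))"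
  then have l: "l < length Ms" and l': "l' < length Ms" by auto
  define A where "A = Ms ! l"
  define B where "B = Ms ! l'"
  have A: "A \<in> carrier_mat k k" and B: "B \<in> carrier_mat k k" using M l l' by (auto simp: A_def B_def)
  let ?g = "\<lambda>a b i. cnj (B $$ (a,i)) * A $$ (a,b) * \<theta> $$ (b,i)"
  have "compl_chan Ms \<theta> $$ (l,l') = mtrace (dag B * A * \<theta>)"
    using l l' by (simp add: compl_chan_def A_def B_def)
  also have "\<dots> = (\<Sum>i<k. \<Sum>a<k. cnj (B $$ (a,i)) * (\<Sum>b<k. A $$ (a,b) * \<theta> $$ (b,i)))"
    using A B th by (simp add: mtrace_def scalar_prod_def atLeast0LessThan carrier_matD)
  also have "\<dots> = (\<Sum>i<k. \<Sum>a<k. \<Sum>b<k. ?g a b i)"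
    by (simp add: sum_distrib_left mult.assoc)
  also have "\<dots> = (\<Sum>a<k. \<Sum>i<k. \<Sum>b<k. ?g a b i)"
    by (rule sum.swap)
  also have "\<dots> = (\<Sum>x<k*k. (vecm k Ms * Wm k \<theta>) $$ (l,x) * cnj (vecm k Ms $$ (l', x)))"
  proof -
    have "(\<Sum>x<k*k. (vecm k Ms * Wm k \<theta>) $$ (l,x) * cnj (vecm k Ms $$ (l', x)))
        = (\<Sum>x<k*k. (\<Sum>b<k. A $$ (x div k, b) * \<theta> $$ (b, x mod k)) * cnj (B $$ (x div k, x mod k)))"
    proof (intro sum.cong refl)
      fix x assume "x \<in> {..<k*k}"
      then have x: "x < k*k" by simp
      show "(vecm k Ms * Wm k \<theta>) $$ (l,x) * cnj (vecm k Ms $$ (l', x))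
          = (\<Sum>b<k. A $$ (x div k, b) * \<theta> $$ (b, x mod k)) * cnj (B $$ (x div k, x mod k))"
        unfolding VW_entry[OF M th l x] using l' x by (simp add: vecm_def A_def B_def)
    qed
    also have "\<dots> = (\<Sum>a<k. \<Sum>i<k. (\<Sum>b<k. A $$ (a, b) * \<theta> $$ (b, i)) * cnj (B $$ (a, i)))"
      by (subst sum_divmod) (intro sum.cong refl, simp)
    also have "\<dots> = (\<Sum>a<k. \<Sum>i<k. \<Sum>b<k. ?g a b i)"
      by (simp only: sum_distrib_right) (intro sum.cong refl; simp only: mult_ac)
    finally show ?thesis by simp
  qed
  also have "\<dots> = (vecm k Ms * Wm k \<theta> * dag (vecm k Ms)) $$ (l,l')"
    using l l' by (simp add: scalar_prod_def atLeast0LessThan)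
  finally show "compl_chan Ms \<theta> $$ (l,l') = (vecm k Ms * Wm k \<theta> * dag (vecm k Ms)) $$ (l,l')" .
qed (auto simp: compl_chan_def)

definition unitm :: "nat \<Rightarrow> nat \<Rightarrow> nat \<Rightarrow> complex mat" where
  "unitm k u v = mat k k (\<lambda>(s,t). if s = u \<and> t = v then 1 else 0)"

lemma unitm_sandwich: assumes A: "A \<in> carrier_mat k k" and u: "u < k" and v: "v < k" and i: "i < k" and i': "i' < k"
  shows "(A * unitm k u v * dag A) $$ (i,i') = A $$ (i,u) * cnj (A $$ (i',v))"
proof -
  have AE: "(A * unitm k u v) $$ (i,t) = (if t = v then A $$ (i,u) else 0)" if t: "t < k" for t
  proof -
    have "(A * unitm k u v) $$ (i,t) = (\<Sum>s\<in>{0..<k}. A $$ (i,s) * (if s = u \<and> t = v then 1 else 0))"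
      using A i t by (simp add: unitm_def scalar_prod_def carrier_matD)
    also have "\<dots> = (\<Sum>s\<in>{0..<k}. if s = u then (if t = v then A $$ (i,s) else 0) else 0)"
      by (intro sum.cong) auto
    also have "\<dots> = (if t = v then A $$ (i,u) else 0)" using u by (simp add: sum.delta')
    finally show ?thesis .
  qed
  have "(A * unitm k u v * dag A) $$ (i,i') = (\<Sum>t\<in>{0..<k}. (A * unitm k u v) $$ (i,t) * cnj (A $$ (i',t)))"
    using A i i' by (simp add: unitm_def scalar_prod_def carrier_matD)
  also have "\<dots> = (\<Sum>t\<in>{0..<k}. if t = v then A $$ (i,u) * cnj (A $$ (i',t)) else 0)"
    by (intro sum.cong) (auto simp: AE)
  also have "\<dots> = A $$ (i,u) * cnj (A $$ (i',v))" using v by (simp add: sum.delta')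
  finally show ?thesis .
qed

lemma unitm_carrier[simp]: "unitm k u v \<in> carrier_mat k k" by (simp add: unitm_def)

lemma gram_eq: assumes KA: "kraus_set k k Psi As" and KC: "kraus_set k k Psi Cs"
  shows "dag (vecm k As) * vecm k As = dag (vecm k Cs) * vecm k Cs"
proof (rule eq_matI)
  fix x y assume x: "x < dim_row (dag (vecm k Cs) * vecm k Cs)" and y: "y < dim_col (dag (vecm k Cs) * vecm k Cs)"
  then have x: "x < k*k" and y: "y < k*k" by auto
  let ?E = "unitm k (y mod k) (x mod k)"
  have gen: "(dag (vecm k Ms) * vecm k Ms) $$ (x,y) = Psi ?E $$ (y div k, x div k)" if K: "kraus_set k k Psi Ms" for Ms
  proof -
    have car: "\<forall>M\<in>set Ms. M \<in> carrier_mat k k" using kraus_set_carrier[OF K] by auto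
    have "(dag (vecm k Ms) * vecm k Ms) $$ (x,y) = (\<Sum>l\<in>{0..<length Ms}. cnj (Ms!l $$ (x div k, x mod k)) * Ms!l $$ (y div k, y mod k))"
      using x y by (simp add: scalar_prod_def vecm_def)
    also have "\<dots> = (\<Sum>l\<in>{0..<length Ms}. (Ms!l * ?E * dag (Ms!l)) $$ (y div k, x div k))"
      using car x y by (intro sum.cong refl) (simp add: unitm_sandwich divmod_lt mult.commute)
    also have "\<dots> = (\<Sum>M\<leftarrow>Ms. (M * ?E * dag M) $$ (y div k, x div k))"
      by (simp add: sum_list_sum_nth)
    also have "\<dots> = msum k k (map (\<lambda>M. M * ?E * dag M) Ms) $$ (y div k, x div k)"
      using car x y by (subst msum_index) (auto simp: divmod_lt comp_def carrier_matD)
    also have "\<dots> = Psi ?E $$ (y div k, x div k)"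
      using kraus_set_eq[OF K unitm_carrier] by simp
    finally show ?thesis .
  qed
  show "(dag (vecm k As) * vecm k As) $$ (x,y) = (dag (vecm k Cs) * vecm k Cs) $$ (x,y)"
    using gen[OF KA] gen[OF KC] by simp
qed auto

definition eij :: "nat \<Rightarrow> nat \<Rightarrow> nat \<Rightarrow> nat \<Rightarrow> complex mat" where
  "eij r p a b = mat r p (\<lambda>(s,t). if s = a \<and> t = b then 1 else 0)"

lemma eij_dims[simp]: "dim_row (eij r p a b) = r" "dim_col (eij r p a b) = p"
  by (simp_all add: eij_def)

lemma eij_left: assumes Y: "Y \<in> carrier_mat p c" and u: "u < r" and t: "t < c" and b: "b < p"
  shows "(eij r p a b * Y) $$ (u,t) = (if u = a then Y $$ (b,t) else 0)"
proof -
  have "(eij r p a b * Y) $$ (u,t) = (\<Sum>s\<in>{0..<p}. (if u = a \<and> s = b then 1 else 0) * Y $$ (s,t))"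
    using Y u t by (simp add: eij_def scalar_prod_def carrier_matD)
  also have "\<dots> = (\<Sum>s\<in>{0..<p}. if s = b then (if u = a then Y $$ (s,t) else 0) else 0)"
    by (intro sum.cong) auto
  also have "\<dots> = (if u = a then Y $$ (b,t) else 0)" using b by (simp add: sum.delta')
  finally show ?thesis .
qed

lemma eij_sandwich: assumes Y: "Y \<in> carrier_mat p p" and u: "u < r" and v: "v < r" and b: "b < p"
  shows "(eij r p a b * Y * dag (eij r p a b)) $$ (u,v) = (if u = a \<and> v = a then Y $$ (b,b) else 0)"
proof -
  have "(eij r p a b * Y * dag (eij r p a b)) $$ (u,v) = (\<Sum>t\<in>{0..<p}. (eij r p a b * Y) $$ (u,t) * cnj (eij r p a b $$ (v,t)))"
    using Y u v by (simp add: scalar_prod_def carrier_matD)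
  also have "\<dots> = (\<Sum>t\<in>{0..<p}. if t = b then (if u = a \<and> v = a then Y $$ (b,t) else 0) else 0)"
  proof (intro sum.cong refl)
    fix t assume "t \<in> {0..<p}"
    then have t: "t < p" by simp
    show "(eij r p a b * Y) $$ (u,t) * cnj (eij r p a b $$ (v,t)) = (if t = b then (if u = a \<and> v = a then Y $$ (b,t) else 0) else 0)"
      unfolding eij_left[OF Y u t b] using v t by (auto simp: eij_def)
  qed
  also have "\<dots> = (if u = a \<and> v = a then Y $$ (b,b) else 0)" using b by (simp add: sum.delta')
  finally show ?thesis .
qed

lemma eij_gram: assumes a: "a < r" and u: "u < p" and v: "v < p"
  shows "(dag (eij r p a b) * eij r p a b) $$ (u,v) = (if u = b \<and> v = b then 1 else 0)"
proof -
  have "(dag (eij r p a b) * eij r p a b) $$ (u,v) = (\<Sum>s\<in>{0..<r}. cnj (eij r p a b $$ (s,u)) * eij r p a b $$ (s,v))"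
    using u v by (simp add: scalar_prod_def)
  also have "\<dots> = (\<Sum>s\<in>{0..<r}. if s = a then (if u = b \<and> v = b then 1 else 0) else 0)"
    using u v by (intro sum.cong refl) (auto simp: eij_def)
  also have "\<dots> = (if u = b \<and> v = b then 1 else 0)" using a by (simp add: sum.delta')
  finally show ?thesis .
qed

lemma msum_upt_index: assumes "\<forall>i<p. f i \<in> carrier_mat r c" "u < r" "v < c"
  shows "msum r c (map f [0..<p]) $$ (u,v) = (\<Sum>i<p. f i $$ (u,v))"
proof -
  have "msum r c (map f [0..<p]) $$ (u,v) = (\<Sum>X\<leftarrow>map f [0..<p]. X $$ (u,v))"
    using assms by (intro msum_index) auto
  also have "\<dots> = (\<Sum>i\<leftarrow>[0..<p]. f i $$ (u,v))" by (simp add: comp_def)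
  also have "\<dots> = (\<Sum>i<p. f i $$ (u,v))"
    by (simp add: sum_set_upt_conv_sum_list_nat[symmetric] atLeast0LessThan)
  finally show ?thesis .
qed

lemma compl_dims[simp]: "dim_row (compl_chan Ms \<theta>) = length Ms" "dim_col (compl_chan Ms \<theta>) = length Ms"
  by (simp_all add: compl_chan_def)

lemma compl_trace: assumes K: "kraus_set k k Psi Ms" and th: "\<theta> \<in> carrier_mat k k"
  shows "mtrace (compl_chan Ms \<theta>) = mtrace \<theta>"
proof -
  have Md: "\<forall>M\<in>set Ms. dim_row M = k \<and> dim_col M = k" by (rule kraus_set_dims[OF K])
  have "mtrace (compl_chan Ms \<theta>) = (\<Sum>l<length Ms. mtrace (dag (Ms!l) * Ms!l * \<theta>))"
    by (simp add: mtrace_def compl_chan_def)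
  also have "\<dots> = (\<Sum>M\<leftarrow>Ms. mtrace (dag M * M * \<theta>))"
    by (simp add: sum_list_sum_nth atLeast0LessThan)
  also have "\<dots> = mtrace (msum k k (map (\<lambda>M. dag M * M * \<theta>) Ms))"
    using Md th by (subst mtrace_msum) (auto simp: comp_def carrier_matD)
  also have "msum k k (map (\<lambda>M. dag M * M * \<theta>) Ms) = msum k k (map (\<lambda>M. dag M * M) Ms) * \<theta>"
    using Md th by (intro msum_mult_right) (auto simp: carrier_matD)
  also have "\<dots> = \<theta>" using kraus_set_tp[OF K] th by simp
  finally show ?thesis .
qed

lemma kraus_nonempty: assumes K: "kraus_set k k Psi Ms" and k: "k > 0" shows "Ms \<noteq> []"
proof
  assume "Ms = []"
  then have "0\<^sub>m k k = (1\<^sub>m k :: complex mat)" using kraus_set_tp[OF K] by simp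
  then have "(0\<^sub>m k k :: complex mat) $$ (0,0) = 1\<^sub>m k $$ (0,0)" by simp
  with k show False by simp
qed


lemma kraus_transfer:
  assumes k: "k > 0" and KA: "kraus_set k k Psi As" and KC: "kraus_set k k Psi Cs"
    and LA: "qchannel k (length As) LamA"
    and eqA: "\<forall>\<theta>\<in>carrier_mat k k. compl_chan As \<theta> = LamA (Psi \<theta>)"
  shows "\<exists>Lam. qchannel k (length Cs) Lam \<and> (\<forall>\<theta>\<in>carrier_mat k k. compl_chan Cs \<theta> = Lam (Psi \<theta>))"
proof -
  define p where "p = length As"
  define r where "r = length Cs"
  define N where "N = k * k"
  define G where "G = vecm k As"
  define F where "F = vecm k Cs"
  define J where "J = dag G * G"
  have r0: "r > 0" using kraus_nonempty[OF KC k] by (simp add: r_def)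
  have Gd[simp]: "dim_row G = p" "dim_col G = N" by (simp_all add: G_def p_def N_def)
  have Fd[simp]: "dim_row F = r" "dim_col F = N" by (simp_all add: F_def r_def N_def)
  have Jd[simp]: "dim_row J = N" "dim_col J = N" by (simp_all add: J_def)
  have JF: "dag F * F = J" unfolding J_def G_def F_def by (rule gram_eq[OF KC KA])
  have JG: "dag G * G = J" by (simp add: J_def)
  have Jc: "J \<in> carrier_mat N N" by (simp add: carrier_dimI)
  from ginv_exists[OF Jc] obtain K0 where K0: "K0 \<in> carrier_mat N N" and JK0J: "J * K0 * J = J"
    by blast
  have K0d[simp]: "dim_row K0 = N" "dim_col K0 = N" using K0 by auto
  have dJ: "dag J = J" unfolding J_def by (simp add: dag_mult_dim)
  have JdK0J: "J * dag K0 * J = J"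
  proof -
    have "J * dag K0 * J = dag J * dag K0 * dag J" using dJ by simp
    also have "\<dots> = dag (J * K0 * J)" by (simp add: mat_dim_simps)
    also have "\<dots> = J" using JK0J dJ by simp
    finally show ?thesis .
  qed
  have g1X: "J * (K0 * (J * X)) = J * X" if "dim_row X = N" for X
  proof -
    have "J * (K0 * (J * X)) = (J * K0 * J) * X" using that by (simp add: mat_dim_simps)
    then show ?thesis using JK0J by simp
  qed
  have g2X: "J * (dag K0 * (J * X)) = J * X" if "dim_row X = N" for X
  proof -
    have "J * (dag K0 * (J * X)) = (J * dag K0 * J) * X" using that by (simp add: mat_dim_simps)
    then show ?thesis using JdK0J by simp
  qed
  have g1: "J * (K0 * J) = J" using JK0J by (simp add: mat_dim_simps)
  have g2: "J * (dag K0 * J) = J" using JdK0J by (simp add: mat_dim_simps)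
  define K where "K = dag K0 * J * K0"
  have Kd[simp]: "dim_row K = N" "dim_col K = N" by (simp_all add: K_def)
  have dK: "dag K = K" unfolding K_def by (simp add: mat_dim_simps dJ)
  have JKJX: "J * (K * (J * X)) = J * X" if "dim_row X = N" for X
    unfolding K_def using that by (simp add: mat_dim_simps g1X g2X)
  have KJKX: "K * (J * (K * X)) = K * X" if "dim_row X = N" for X
    unfolding K_def using that by (simp add: mat_dim_simps g1X g2X)
  have JKJ: "J * (K * J) = J" using JKJX[of "1\<^sub>m N"] by simp
  have hF: "dag F * (F * Y) = J * Y" if "dim_row Y = N" for Y
  proof -
    have "dag F * (F * Y) = (dag F * F) * Y" using that by (simp add: mat_dim_simps)
    then show ?thesis using JF by simp
  qed
  have hG: "dag G * (G * Y) = J * Y" if "dim_row Y = N" for Y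
  proof -
    have "dag G * (G * Y) = (dag G * G) * Y" using that by (simp add: mat_dim_simps)
    then show ?thesis using JG by simp
  qed
  define Z where "Z = F * K * dag G"
  have Zd[simp]: "dim_row Z = r" "dim_col Z = p" by (simp_all add: Z_def)
  have FKJ: "F * (K * J) = F"
  proof -
    define X where "X = F * (K * J) - F"
    have Xd[simp]: "dim_row X = r" "dim_col X = N" by (simp_all add: X_def)
    have dFX: "dag F * X = 0\<^sub>m N N"
    proof -
      have "dag F * X = J * (K * J) - J" unfolding X_def by (simp add: mat_dim_simps hF JF)
      also have "\<dots> = 0\<^sub>m N N" unfolding JKJ by (intro eq_matI) auto
      finally show ?thesis .
    qed
    have "dag X = J * (K * dag F) - dag F" unfolding X_def by (simp add: mat_dim_simps dJ dK)
    then have "dag X * X = J * (K * (dag F * X)) - dag F * X" by (simp add: mat_dim_simps)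
    also have "\<dots> = 0\<^sub>m N N" unfolding dFX by (intro eq_matI) auto
    finally have dXX: "dag X * X = 0\<^sub>m N N" .
    have "msum N N (map (\<lambda>M. M * dag M) [dag X]) = 0\<^sub>m N N" using dXX by simp
    then have "\<forall>M\<in>set [dag X]. M = 0\<^sub>m N r" by (intro msum_psd_zero) auto
    then have "dag X = 0\<^sub>m N r" by simp
    then have "X = 0\<^sub>m r N" by (metis dag_dag dag_zero)
    then have "F * (K * J) - F = 0\<^sub>m r N" by (simp add: X_def)
    then show ?thesis by (rule minus_zero_eq[rotated 2]) auto
  qed
  have ZG: "Z * G = F" unfolding Z_def by (simp add: mat_dim_simps JG FKJ)
  define S where "S = G * K * dag G"
  have Sd[simp]: "dim_row S = p" "dim_col S = p" by (simp_all add: S_def)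
  have dZ: "dag Z = G * (K * dag F)" unfolding Z_def by (simp add: mat_dim_simps dK)
  have dZZ: "dag Z * Z = S" unfolding dZ unfolding Z_def S_def by (simp add: mat_dim_simps hF KJKX)
  have SS: "S * S = S" unfolding S_def by (simp add: mat_dim_simps hG KJKX)
  have dS: "dag S = S" unfolding S_def by (simp add: mat_dim_simps dK)
  have As_car: "\<forall>M\<in>set As. M \<in> carrier_mat k k" using kraus_set_carrier[OF KA] by auto
  have Cs_car: "\<forall>M\<in>set Cs. M \<in> carrier_mat k k" using kraus_set_carrier[OF KC] by auto
  have complCA: "compl_chan Cs \<theta> = Z * compl_chan As \<theta> * dag Z" if th: "\<theta> \<in> carrier_mat k k" for \<theta>
  proof -
    have "compl_chan Cs \<theta> = F * Wm k \<theta> * dag F" unfolding F_def by (rule vec_compl[OF Cs_car th])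
    also have "\<dots> = (Z * G) * Wm k \<theta> * dag (Z * G)" unfolding ZG ..
    also have "\<dots> = Z * (G * Wm k \<theta> * dag G) * dag Z" by (simp add: mat_dim_simps N_def)
    also have "G * Wm k \<theta> * dag G = compl_chan As \<theta>" unfolding G_def by (rule vec_compl[OF As_car th, symmetric])
    finally show ?thesis .
  qed
  define Pm where "Pm = 1\<^sub>m p - S"
  have Pmd[simp]: "dim_row Pm = p" "dim_col Pm = p" by (simp_all add: Pm_def)
  have dPm: "dag Pm = Pm" unfolding Pm_def by (simp add: dag_minus_dim dS)
  have PmPm: "Pm * Pm = Pm"
  proof -
    have "Pm * Pm = 1\<^sub>m p - S - (S - S * S)" unfolding Pm_def by (simp add: mat_dim_simps)
    also have "\<dots> = Pm" unfolding SS Pm_def by (intro eq_matI) auto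
    finally show ?thesis .
  qed
  define E where "E = (\<lambda>i. eij r p 0 i)"
  have Ed[simp]: "dim_row (E i) = r" "dim_col (E i) = p" for i by (simp_all add: E_def)
  define Rs where "Rs = Z # map (\<lambda>i. E i * Pm) [0..<p]"
  define R where "R = (\<lambda>X. msum r r (map (\<lambda>M. M * X * dag M) Rs))"
  have Rs_car: "\<forall>M\<in>set Rs. M \<in> carrier_mat r p" by (auto simp: Rs_def intro: carrier_dimI)
  have sumE: "msum p p (map (\<lambda>i. dag (E i) * E i) [0..<p]) = 1\<^sub>m p"
  proof (rule eq_matI)
    fix u v assume u: "u < dim_row (1\<^sub>m p)" and v: "v < dim_col (1\<^sub>m p)"
    then have u: "u < p" and v: "v < p" by auto
    have "msum p p (map (\<lambda>i. dag (E i) * E i) [0..<p]) $$ (u,v) = (\<Sum>i<p. (dag (E i) * E i) $$ (u,v))"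
      using u v by (intro msum_upt_index) (auto intro: carrier_dimI)
    also have "\<dots> = (\<Sum>i<p. if i = u then (if v = u then 1 else 0) else 0)"
      using u v r0 by (intro sum.cong refl) (simp only: E_def eij_gram[OF r0 u v], auto)
    also have "\<dots> = 1\<^sub>m p $$ (u,v)" using u v by (simp add: sum.delta')
    finally show "msum p p (map (\<lambda>i. dag (E i) * E i) [0..<p]) $$ (u,v) = 1\<^sub>m p $$ (u,v)" .
  qed auto
  have tpR: "msum p p (map (\<lambda>M. dag M * M) Rs) = 1\<^sub>m p"
  proof -
    have "msum p p (map (\<lambda>M. dag M * M) Rs) = dag Z * Z + msum p p (map (\<lambda>i. dag (E i * Pm) * (E i * Pm)) [0..<p])"
      by (simp add: Rs_def comp_def)
    also have "msum p p (map (\<lambda>i. dag (E i * Pm) * (E i * Pm)) [0..<p]) = msum p p (map (\<lambda>i. Pm * (dag (E i) * E i * Pm)) [0..<p])"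
      by (intro msum_cong) (simp add: mat_dim_simps dPm)
    also have "\<dots> = Pm * msum p p (map (\<lambda>i. dag (E i) * E i * Pm) [0..<p])"
      by (intro msum_mult_left) (auto intro: carrier_dimI)
    also have "msum p p (map (\<lambda>i. dag (E i) * E i * Pm) [0..<p]) = msum p p (map (\<lambda>i. dag (E i) * E i) [0..<p]) * Pm"
      by (intro msum_mult_right) (auto intro: carrier_dimI)
    also have "\<dots> = Pm" unfolding sumE by simp
    also have "Pm * Pm = Pm" by (rule PmPm)
    also have "dag Z * Z + Pm = 1\<^sub>m p" unfolding dZZ Pm_def by (intro eq_matI) auto
    finally show ?thesis .
  qed
  have KR: "kraus_set p r R Rs" unfolding kraus_set_def R_def using Rs_car tpR by auto
  have R_eq: "R (compl_chan As \<theta>) = compl_chan Cs \<theta>" if th: "\<theta> \<in> carrier_mat k k" for \<theta>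
  proof -
    define X where "X = compl_chan As \<theta>"
    have Xd[simp]: "dim_row X = p" "dim_col X = p" by (simp_all add: X_def p_def)
    define Y where "Y = Pm * X * Pm"
    have Yd[simp]: "dim_row Y = p" "dim_col Y = p" by (simp_all add: Y_def)
    have trX: "mtrace X = mtrace \<theta>" unfolding X_def by (rule compl_trace[OF KA th])
    have trZ: "mtrace (Z * X * dag Z) = mtrace \<theta>" unfolding X_def complCA[OF th, symmetric] by (rule compl_trace[OF KC th])
    have trY: "mtrace Y = 0"
    proof -
      have "mtrace Y = mtrace (Pm * (Pm * X))"
        unfolding Y_def by (subst mtrace_comm[of _ p p]) (auto intro: carrier_dimI simp: mat_dim_simps)
      also have "Pm * (Pm * X) = Pm * X" using PmPm by (metis Pmd(1) Pmd(2) Xd(1) mult_assoc_dim)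
      also have "Pm * X = X - S * X" unfolding Pm_def by (simp add: mat_dim_simps)
      also have "mtrace (X - S * X) = mtrace X - mtrace (S * X)"
        by (rule mtrace_minus) (auto intro: carrier_dimI)
      also have "S * X = dag Z * (Z * X)" unfolding dZZ[symmetric] by (simp add: mat_dim_simps)
      also have "mtrace (dag Z * (Z * X)) = mtrace ((Z * X) * dag Z)"
        by (rule mtrace_comm[of _ p r]) (auto intro: carrier_dimI)
      finally show ?thesis using trX trZ by simp
    qed
    have "R X = Z * X * dag Z + msum r r (map (\<lambda>i. E i * Pm * X * dag (E i * Pm)) [0..<p])"
      by (simp add: R_def Rs_def comp_def)
    also have "msum r r (map (\<lambda>i. E i * Pm * X * dag (E i * Pm)) [0..<p]) = 0\<^sub>m r r"
    proof (rule eq_matI)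
      fix u v assume u: "u < dim_row (0\<^sub>m r r :: complex mat)" and v: "v < dim_col (0\<^sub>m r r :: complex mat)"
      then have u: "u < r" and v: "v < r" by auto
      have "msum r r (map (\<lambda>i. E i * Pm * X * dag (E i * Pm)) [0..<p]) $$ (u,v) = (\<Sum>i<p. (E i * Pm * X * dag (E i * Pm)) $$ (u,v))"
        using u v by (intro msum_upt_index) (auto intro: carrier_dimI)
      also have "\<dots> = (\<Sum>i<p. (E i * Y * dag (E i)) $$ (u,v))"
        by (intro sum.cong refl) (simp add: Y_def mat_dim_simps dPm)
      also have "\<dots> = (\<Sum>i<p. if u = 0 \<and> v = 0 then Y $$ (i,i) else 0)"
      proof (intro sum.cong refl)
        fix i assume "i \<in> {..<p}"
        then have i: "i < p" by simp
        have Yc: "Y \<in> carrier_mat p p" by (auto intro: carrier_dimI)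
        show "(E i * Y * dag (E i)) $$ (u,v) = (if u = 0 \<and> v = 0 then Y $$ (i,i) else 0)"
          unfolding E_def by (rule eij_sandwich[OF Yc u v i])
      qed
      also have "\<dots> = (if u = 0 \<and> v = 0 then mtrace Y else 0)" by (simp add: mtrace_def)
      also have "\<dots> = 0" using trY by simp
      finally show "msum r r (map (\<lambda>i. E i * Pm * X * dag (E i * Pm)) [0..<p]) $$ (u,v) = 0\<^sub>m r r $$ (u,v)"
        using u v by simp
    qed auto
    also have "Z * X * dag Z + 0\<^sub>m r r = Z * X * dag Z" by (intro eq_matI) auto
    finally show ?thesis unfolding X_def using complCA[OF th] by simp
  qed
  have "qchannel k r (\<lambda>\<rho>. R (LamA \<rho>))"
    using qchannel_comp[of k p LamA r R] LA KR unfolding qchannel_def p_def by blast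
  moreover have "\<forall>\<theta>\<in>carrier_mat k k. compl_chan Cs \<theta> = R (LamA (Psi \<theta>))"
    using R_eq eqA by simp
  ultimately show ?thesis unfolding r_def by blast
qed

definition PA :: "nat \<Rightarrow> nat \<Rightarrow> complex mat" where
  "PA n m = mat (n+m) n (\<lambda>(i,j). if i = j then 1 else 0)"
definition PB :: "nat \<Rightarrow> nat \<Rightarrow> complex mat" where
  "PB n m = mat (n+m) m (\<lambda>(i,j). if i = j + n then 1 else 0)"

lemma PA_dims[simp]: "dim_row (PA n m) = n + m" "dim_col (PA n m) = n" by (simp_all add: PA_def)
lemma PB_dims[simp]: "dim_row (PB n m) = n + m" "dim_col (PB n m) = m" by (simp_all add: PB_def)
lemma PA_car[simp]: "PA n m \<in> carrier_mat (n+m) n" by (simp add: carrier_dimI)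
lemma PB_car[simp]: "PB n m \<in> carrier_mat (n+m) m" by (simp add: carrier_dimI)

lemma add_zero_dim[simp]: "dim_row A = r \<Longrightarrow> dim_col A = c \<Longrightarrow> A + 0\<^sub>m r c = (A :: complex mat)"
  "dim_row A = r \<Longrightarrow> dim_col A = c \<Longrightarrow> 0\<^sub>m r c + A = (A :: complex mat)"
  by (intro eq_matI; auto)+

lemma PA_left: assumes X: "X \<in> carrier_mat n c" and i: "i < n + m" and j: "j < c"
  shows "(PA n m * X) $$ (i,j) = (if i < n then X $$ (i,j) else 0)"
proof -
  have "(PA n m * X) $$ (i,j) = (\<Sum>t\<in>{0..<n}. (if i = t then 1 else 0) * X $$ (t,j))"
    using X i j by (simp add: PA_def scalar_prod_def carrier_matD)
  also have "\<dots> = (\<Sum>t\<in>{0..<n}. if t = i then X $$ (t,j) else 0)" by (intro sum.cong) auto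
  also have "\<dots> = (if i < n then X $$ (i,j) else 0)" by (simp add: sum.delta')
  finally show ?thesis .
qed

lemma PA_right_dag: assumes Y: "Y \<in> carrier_mat c n" and i: "i < c" and j: "j < n + m"
  shows "(Y * dag (PA n m)) $$ (i,j) = (if j < n then Y $$ (i,j) else 0)"
proof -
  have "(Y * dag (PA n m)) $$ (i,j) = (\<Sum>t\<in>{0..<n}. Y $$ (i,t) * cnj (if j = t then 1 else 0))"
    using Y i j by (simp add: PA_def scalar_prod_def carrier_matD)
  also have "\<dots> = (\<Sum>t\<in>{0..<n}. if t = j then Y $$ (i,t) else 0)" by (intro sum.cong) auto
  also have "\<dots> = (if j < n then Y $$ (i,j) else 0)" by (simp add: sum.delta')
  finally show ?thesis .
qed

lemma PA_dag_left: assumes M: "M \<in> carrier_mat (n+m) c" and i: "i < n" and j: "j < c"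
  shows "(dag (PA n m) * M) $$ (i,j) = M $$ (i,j)"
proof -
  have "(dag (PA n m) * M) $$ (i,j) = (\<Sum>t\<in>{0..<n+m}. cnj (if t = i then 1 else 0) * M $$ (t,j))"
    using M i j by (simp add: PA_def scalar_prod_def carrier_matD)
  also have "\<dots> = (\<Sum>t\<in>{0..<n+m}. if t = i then M $$ (t,j) else 0)" by (intro sum.cong) auto
  also have "\<dots> = M $$ (i,j)" using i by (simp add: sum.delta')
  finally show ?thesis .
qed

lemma PA_right: assumes M: "M \<in> carrier_mat c (n+m)" and i: "i < c" and j: "j < n"
  shows "(M * PA n m) $$ (i,j) = M $$ (i,j)"
proof -
  have "(M * PA n m) $$ (i,j) = (\<Sum>t\<in>{0..<n+m}. M $$ (i,t) * (if t = j then 1 else 0))"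
    using M i j by (simp add: PA_def scalar_prod_def carrier_matD)
  also have "\<dots> = (\<Sum>t\<in>{0..<n+m}. if t = j then M $$ (i,t) else 0)" by (intro sum.cong) auto
  also have "\<dots> = M $$ (i,j)" using j by (simp add: sum.delta')
  finally show ?thesis .
qed

lemma PB_left: assumes X: "X \<in> carrier_mat m c" and i: "i < n + m" and j: "j < c"
  shows "(PB n m * X) $$ (i,j) = (if n \<le> i then X $$ (i - n,j) else 0)"
proof -
  have "(PB n m * X) $$ (i,j) = (\<Sum>t\<in>{0..<m}. (if i = t + n then 1 else 0) * X $$ (t,j))"
    using X i j by (simp add: PB_def scalar_prod_def carrier_matD)
  also have "\<dots> = (\<Sum>t\<in>{0..<m}. if t = i - n then (if n \<le> i then X $$ (t,j) else 0) else 0)"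
    by (intro sum.cong) auto
  also have "\<dots> = (if n \<le> i then X $$ (i - n,j) else 0)" using i by (auto simp: sum.delta')
  finally show ?thesis .
qed

lemma PB_right_dag: assumes Y: "Y \<in> carrier_mat c m" and i: "i < c" and j: "j < n + m"
  shows "(Y * dag (PB n m)) $$ (i,j) = (if n \<le> j then Y $$ (i,j - n) else 0)"
proof -
  have "(Y * dag (PB n m)) $$ (i,j) = (\<Sum>t\<in>{0..<m}. Y $$ (i,t) * cnj (if j = t + n then 1 else 0))"
    using Y i j by (simp add: PB_def scalar_prod_def carrier_matD)
  also have "\<dots> = (\<Sum>t\<in>{0..<m}. if t = j - n then (if n \<le> j then Y $$ (i,t) else 0) else 0)"
    by (intro sum.cong) auto
  also have "\<dots> = (if n \<le> j then Y $$ (i,j - n) else 0)" using j by (auto simp: sum.delta')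
  finally show ?thesis .
qed

lemma PB_dag_left: assumes M: "M \<in> carrier_mat (n+m) c" and i: "i < m" and j: "j < c"
  shows "(dag (PB n m) * M) $$ (i,j) = M $$ (i + n,j)"
proof -
  have "(dag (PB n m) * M) $$ (i,j) = (\<Sum>t\<in>{0..<n+m}. cnj (if t = i + n then 1 else 0) * M $$ (t,j))"
    using M i j by (simp add: PB_def scalar_prod_def carrier_matD)
  also have "\<dots> = (\<Sum>t\<in>{0..<n+m}. if t = i + n then M $$ (t,j) else 0)" by (intro sum.cong) auto
  also have "\<dots> = M $$ (i + n,j)" using i by (simp add: sum.delta')
  finally show ?thesis .
qed

lemma PB_right: assumes M: "M \<in> carrier_mat c (n+m)" and i: "i < c" and j: "j < m"
  shows "(M * PB n m) $$ (i,j) = M $$ (i,j + n)"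
proof -
  have "(M * PB n m) $$ (i,j) = (\<Sum>t\<in>{0..<n+m}. M $$ (i,t) * (if t = j + n then 1 else 0))"
    using M i j by (simp add: PB_def scalar_prod_def carrier_matD)
  also have "\<dots> = (\<Sum>t\<in>{0..<n+m}. if t = j + n then M $$ (i,t) else 0)" by (intro sum.cong) auto
  also have "\<dots> = M $$ (i,j + n)" using j by (simp add: sum.delta')
  finally show ?thesis .
qed

lemma PA_iso: "dag (PA n m) * PA n m = 1\<^sub>m n"
proof (rule eq_matI)
  fix i j assume "i < dim_row (1\<^sub>m n :: complex mat)" "j < dim_col (1\<^sub>m n :: complex mat)"
  then have i: "i < n" and j: "j < n" by auto
  show "(dag (PA n m) * PA n m) $$ (i,j) = 1\<^sub>m n $$ (i,j)"
    unfolding PA_dag_left[OF PA_car i j] using i j by (simp add: PA_def)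
qed auto

lemma PB_iso: "dag (PB n m) * PB n m = 1\<^sub>m m"
proof (rule eq_matI)
  fix i j assume "i < dim_row (1\<^sub>m m :: complex mat)" "j < dim_col (1\<^sub>m m :: complex mat)"
  then have i: "i < m" and j: "j < m" by auto
  show "(dag (PB n m) * PB n m) $$ (i,j) = 1\<^sub>m m $$ (i,j)"
    unfolding PB_dag_left[OF PB_car i j] using i j by (simp add: PB_def)
qed auto

lemma PAB_cross: "dag (PA n m) * PB n m = 0\<^sub>m n m"
proof (rule eq_matI)
  fix i j assume "i < dim_row (0\<^sub>m n m :: complex mat)" "j < dim_col (0\<^sub>m n m :: complex mat)"
  then have i: "i < n" and j: "j < m" by auto
  show "(dag (PA n m) * PB n m) $$ (i,j) = 0\<^sub>m n m $$ (i,j)"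
    unfolding PA_dag_left[OF PB_car i j] using i j by (simp add: PB_def)
qed auto

lemma PBA_cross: "dag (PB n m) * PA n m = 0\<^sub>m m n"
proof (rule eq_matI)
  fix i j assume "i < dim_row (0\<^sub>m m n :: complex mat)" "j < dim_col (0\<^sub>m m n :: complex mat)"
  then have i: "i < m" and j: "j < n" by auto
  show "(dag (PB n m) * PA n m) $$ (i,j) = 0\<^sub>m m n $$ (i,j)"
    unfolding PB_dag_left[OF PA_car i j] using i j by (simp add: PA_def)
qed auto

lemma PAB_cross_X: "dim_row X = m \<Longrightarrow> dag (PA n m) * (PB n m * X) = 0\<^sub>m n (dim_col X)"
proof -
  assume "dim_row X = m"
  then have "dag (PA n m) * (PB n m * X) = (dag (PA n m) * PB n m) * X" by (simp add: mat_dim_simps)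
  then show ?thesis using \<open>dim_row X = m\<close> by (simp add: PAB_cross)
qed

lemma PBA_cross_X: "dim_row X = n \<Longrightarrow> dag (PB n m) * (PA n m * X) = 0\<^sub>m m (dim_col X)"
proof -
  assume "dim_row X = n"
  then have "dag (PB n m) * (PA n m * X) = (dag (PB n m) * PA n m) * X" by (simp add: mat_dim_simps)
  then show ?thesis using \<open>dim_row X = n\<close> by (simp add: PBA_cross)
qed

lemma PA_iso_X: "dim_row X = n \<Longrightarrow> dag (PA n m) * (PA n m * X) = X"
proof -
  assume "dim_row X = n"
  then have "dag (PA n m) * (PA n m * X) = (dag (PA n m) * PA n m) * X" by (simp add: mat_dim_simps)
  then show ?thesis using \<open>dim_row X = n\<close> by (simp add: PA_iso)
qed

lemma PB_iso_X: "dim_row X = m \<Longrightarrow> dag (PB n m) * (PB n m * X) = X"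
proof -
  assume "dim_row X = m"
  then have "dag (PB n m) * (PB n m * X) = (dag (PB n m) * PB n m) * X" by (simp add: mat_dim_simps)
  then show ?thesis using \<open>dim_row X = m\<close> by (simp add: PB_iso)
qed

lemma PAB_sum: "PA n m * dag (PA n m) + PB n m * dag (PB n m) = 1\<^sub>m (n+m)"
proof (rule eq_matI)
  fix i j assume i: "i < dim_row (1\<^sub>m (n+m) :: complex mat)" and j: "j < dim_col (1\<^sub>m (n+m) :: complex mat)"
  then have i: "i < n+m" and j: "j < n+m" by auto
  have a: "(PA n m * dag (PA n m)) $$ (i,j) = (if j < n then (if i = j then 1 else 0) else 0)"
    unfolding PA_right_dag[OF PA_car i j] using i j by (simp add: PA_def)
  have b: "(PB n m * dag (PB n m)) $$ (i,j) = (if n \<le> j then (if i = j then 1 else 0) else 0)"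
    unfolding PB_right_dag[OF PB_car i j] using i j by (auto simp: PB_def)
  show "(PA n m * dag (PA n m) + PB n m * dag (PB n m)) $$ (i,j) = 1\<^sub>m (n+m) $$ (i,j)"
    using i j a b by auto
qed auto

lemma block_A: assumes r: "\<rho> \<in> carrier_mat n n"
  shows "PA n m * \<rho> * dag (PA n m) = four_block_mat \<rho> (0\<^sub>m n m) (0\<^sub>m m n) (0\<^sub>m m m)"
proof (rule eq_matI)
  fix i j assume i: "i < dim_row (four_block_mat \<rho> (0\<^sub>m n m) (0\<^sub>m m n) (0\<^sub>m m m))"
    and j: "j < dim_col (four_block_mat \<rho> (0\<^sub>m n m) (0\<^sub>m m n) (0\<^sub>m m m))"
  then have i: "i < n+m" and j: "j < n+m" using r by auto
  have c1: "PA n m * \<rho> \<in> carrier_mat (n+m) n" using r by (simp add: carrier_matD)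
  show "(PA n m * \<rho> * dag (PA n m)) $$ (i,j) = four_block_mat \<rho> (0\<^sub>m n m) (0\<^sub>m m n) (0\<^sub>m m m) $$ (i,j)"
  proof (cases "j < n")
    case True
    show ?thesis unfolding PA_right_dag[OF c1 i j] PA_left[OF r i True] using True i j r by (simp add: carrier_matD)
  next
    case False
    show ?thesis unfolding PA_right_dag[OF c1 i j] using False i j r by (simp add: carrier_matD)
  qed
qed (use r in auto)

lemma block_B: assumes r: "\<rho> \<in> carrier_mat m m"
  shows "PB n m * \<rho> * dag (PB n m) = four_block_mat (0\<^sub>m n n) (0\<^sub>m n m) (0\<^sub>m m n) \<rho>"
proof (rule eq_matI)
  fix i j assume i: "i < dim_row (four_block_mat (0\<^sub>m n n) (0\<^sub>m n m) (0\<^sub>m m n) \<rho>)"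
    and j: "j < dim_col (four_block_mat (0\<^sub>m n n) (0\<^sub>m n m) (0\<^sub>m m n) \<rho>)"
  then have i: "i < n+m" and j: "j < n+m" using r by auto
  have c1: "PB n m * \<rho> \<in> carrier_mat (n+m) m" using r by (simp add: carrier_matD)
  show "(PB n m * \<rho> * dag (PB n m)) $$ (i,j) = four_block_mat (0\<^sub>m n n) (0\<^sub>m n m) (0\<^sub>m m n) \<rho> $$ (i,j)"
  proof (cases "n \<le> j")
    case True
    then have j': "j - n < m" using j by auto
    show ?thesis unfolding PB_right_dag[OF c1 i j] PB_left[OF r i j'] using True i j r by (simp add: carrier_matD)
  next
    case False
    show ?thesis unfolding PB_right_dag[OF c1 i j] using False i j r by (simp add: carrier_matD)
  qed
qed (use r in auto)

lemma block_extract_A: assumes A: "A \<in> carrier_mat n n" and D: "D \<in> carrier_mat m m"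
  and B: "B \<in> carrier_mat n m" and C: "C \<in> carrier_mat m n"
  shows "dag (PA n m) * four_block_mat A B C D * PA n m = A"
proof (rule eq_matI)
  fix i j assume i: "i < dim_row A" and j: "j < dim_col A"
  then have i: "i < n" and j: "j < n" using A by auto
  have fc: "four_block_mat A B C D \<in> carrier_mat (n+m) (n+m)" using A D by simp
  have c1: "dag (PA n m) * four_block_mat A B C D \<in> carrier_mat n (n+m)" using A D by (simp add: carrier_matD)
  show "(dag (PA n m) * four_block_mat A B C D * PA n m) $$ (i,j) = A $$ (i,j)"
    using PA_right[OF c1 i j] PA_dag_left[OF fc i, of j] i j A D by (simp add: carrier_matD)
qed (use A in auto)

lemma block_extract_B: assumes A: "A \<in> carrier_mat n n" and D: "D \<in> carrier_mat m m"
  and B: "B \<in> carrier_mat n m" and C: "C \<in> carrier_mat m n"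
  shows "dag (PB n m) * four_block_mat A B C D * PB n m = D"
proof (rule eq_matI)
  fix i j assume i: "i < dim_row D" and j: "j < dim_col D"
  then have i: "i < m" and j: "j < m" using D by auto
  have fc: "four_block_mat A B C D \<in> carrier_mat (n+m) (n+m)" using A D by simp
  have c1: "dag (PB n m) * four_block_mat A B C D \<in> carrier_mat m (n+m)" using A D by (simp add: carrier_matD)
  have jn: "j + n < n + m" using j by simp
  show "(dag (PB n m) * four_block_mat A B C D * PB n m) $$ (i,j) = D $$ (i,j)" unfolding PB_right[OF c1 i j] PB_dag_left[OF fc i jn] using i j A D by (simp add: carrier_matD)
qed (use D in auto)

lemma block_decomp: assumes T: "T \<in> carrier_mat (n+m) (n+m)"
  shows "T = four_block_mat (dag (PA n m) * T * PA n m) (dag (PA n m) * T * PB n m)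
                            (dag (PB n m) * T * PA n m) (dag (PB n m) * T * PB n m)"
proof (rule eq_matI)
  fix i j assume i: "i < dim_row (four_block_mat (dag (PA n m) * T * PA n m) (dag (PA n m) * T * PB n m)
                            (dag (PB n m) * T * PA n m) (dag (PB n m) * T * PB n m))"
    and j: "j < dim_col (four_block_mat (dag (PA n m) * T * PA n m) (dag (PA n m) * T * PB n m)
                            (dag (PB n m) * T * PA n m) (dag (PB n m) * T * PB n m))"
  then have i: "i < n+m" and j: "j < n+m" by auto
  have cA: "dag (PA n m) * T \<in> carrier_mat n (n+m)" using T by (simp add: carrier_matD)
  have cB: "dag (PB n m) * T \<in> carrier_mat m (n+m)" using T by (simp add: carrier_matD)
  show "T $$ (i,j) = four_block_mat (dag (PA n m) * T * PA n m) (dag (PA n m) * T * PB n m)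
                            (dag (PB n m) * T * PA n m) (dag (PB n m) * T * PB n m) $$ (i,j)"
  proof (cases "i < n")
    case True
    then show ?thesis
    proof (cases "j < n")
      case True
      then show ?thesis using \<open>i < n\<close> i j T
        PA_right[OF cA \<open>i<n\<close> True] PA_dag_left[OF T \<open>i<n\<close> j] by (simp add: carrier_matD)
    next
      case False
      then have j': "j - n < m" using j by auto
      have jj: "j - n + n = j" using False by auto
      show ?thesis using \<open>i < n\<close> False i j T
        PB_right[OF cA \<open>i<n\<close> j'] jj PA_dag_left[OF T \<open>i<n\<close> j] by (simp add: carrier_matD)
    qed
  next
    case False
    then have i': "i - n < m" using i by auto
    have ii: "i - n + n = i" using False by auto
    show ?thesis
    proof (cases "j < n")
      case True
      then show ?thesis using False i j T
        PA_right[OF cB i' True] PB_dag_left[OF T i' j] ii by (simp add: carrier_matD)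
    next
      case False
      then have j': "j - n < m" using j by auto
      have jj: "j - n + n = j" using False by auto
      show ?thesis using \<open>\<not> i < n\<close> False i j T
        PB_right[OF cB i' j'] jj PB_dag_left[OF T i' j] ii by (simp add: carrier_matD)
    qed
  qed
qed (use T in auto)

lemma lin_zero: assumes L: "lin_on r c f" and C: "\<forall>X\<in>carrier_mat r c. f X \<in> carrier_mat r c"
  shows "f (0\<^sub>m r c) = 0\<^sub>m r c"
proof -
  have z: "0\<^sub>m r c \<in> carrier_mat r c" by simp
  have "f ((1::complex) \<cdot>\<^sub>m 0\<^sub>m r c + 0\<^sub>m r c) = 1 \<cdot>\<^sub>m f (0\<^sub>m r c) + f (0\<^sub>m r c)"
    using L z unfolding lin_on_def by blast
  moreover have "(1::complex) \<cdot>\<^sub>m 0\<^sub>m r c + 0\<^sub>m r c = 0\<^sub>m r c" by (intro eq_matI) auto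
  ultimately have e: "f (0\<^sub>m r c) = 1 \<cdot>\<^sub>m f (0\<^sub>m r c) + f (0\<^sub>m r c)" by simp
  have fc: "f (0\<^sub>m r c) \<in> carrier_mat r c" using C z by blast
  show ?thesis
  proof (rule eq_matI)
    fix i j assume i: "i < dim_row (0\<^sub>m r c :: complex mat)" and j: "j < dim_col (0\<^sub>m r c :: complex mat)"
    then have "f (0\<^sub>m r c) $$ (i,j) = (1 \<cdot>\<^sub>m f (0\<^sub>m r c) + f (0\<^sub>m r c)) $$ (i,j)" using e by simp
    also have "\<dots> = f (0\<^sub>m r c) $$ (i,j) + f (0\<^sub>m r c) $$ (i,j)" using i j fc by (simp add: carrier_matD)
    finally show "f (0\<^sub>m r c) $$ (i,j) = 0\<^sub>m r c $$ (i,j)" using i j by simp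
  qed (use fc in auto)
qed

lemma kraus_sum:
  assumes KA: "kraus_set n r LA KsA" and KB: "kraus_set m r LB KsB"
  shows "kraus_set (n+m) r (\<lambda>X. LA (dag (PA n m) * X * PA n m) + LB (dag (PB n m) * X * PB n m))
           (map (\<lambda>K. K * dag (PA n m)) KsA @ map (\<lambda>L. L * dag (PB n m)) KsB)"
proof -
  note dA = kraus_set_dims[OF KA] and dB = kraus_set_dims[OF KB]
  let ?Ks = "map (\<lambda>K. K * dag (PA n m)) KsA @ map (\<lambda>L. L * dag (PB n m)) KsB"
  have car: "\<forall>M\<in>set ?Ks. M \<in> carrier_mat r (n+m)" using dA dB by auto
  have tA: "msum (n+m) (n+m) (map (\<lambda>M. dag M * M) (map (\<lambda>K. K * dag (PA n m)) KsA)) = PA n m * dag (PA n m)"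
  proof -
    have "msum (n+m) (n+m) (map (\<lambda>M. dag M * M) (map (\<lambda>K. K * dag (PA n m)) KsA))
        = msum (n+m) (n+m) (map (\<lambda>K. PA n m * (dag K * K * dag (PA n m))) KsA)"
      unfolding map_map comp_def by (rule msum_cong) (use dA in \<open>auto simp: mat_dim_simps\<close>)
    also have "\<dots> = PA n m * msum n (n+m) (map (\<lambda>K. dag K * K * dag (PA n m)) KsA)"
      using dA by (intro msum_mult_left) auto
    also have "msum n (n+m) (map (\<lambda>K. dag K * K * dag (PA n m)) KsA) = msum n n (map (\<lambda>K. dag K * K) KsA) * dag (PA n m)"
      using dA by (intro msum_mult_right) auto
    also have "\<dots> = dag (PA n m)" using kraus_set_tp[OF KA] by simp
    finally show ?thesis .
  qed
  have tB: "msum (n+m) (n+m) (map (\<lambda>M. dag M * M) (map (\<lambda>L. L * dag (PB n m)) KsB)) = PB n m * dag (PB n m)"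
  proof -
    have "msum (n+m) (n+m) (map (\<lambda>M. dag M * M) (map (\<lambda>L. L * dag (PB n m)) KsB))
        = msum (n+m) (n+m) (map (\<lambda>L. PB n m * (dag L * L * dag (PB n m))) KsB)"
      unfolding map_map comp_def by (rule msum_cong) (use dB in \<open>auto simp: mat_dim_simps\<close>)
    also have "\<dots> = PB n m * msum m (n+m) (map (\<lambda>L. dag L * L * dag (PB n m)) KsB)"
      using dB by (intro msum_mult_left) auto
    also have "msum m (n+m) (map (\<lambda>L. dag L * L * dag (PB n m)) KsB) = msum m m (map (\<lambda>L. dag L * L) KsB) * dag (PB n m)"
      using dB by (intro msum_mult_right) auto
    also have "\<dots> = dag (PB n m)" using kraus_set_tp[OF KB] by simp
    finally show ?thesis .
  qed
  have tp: "msum (n+m) (n+m) (map (\<lambda>M. dag M * M) ?Ks) = 1\<^sub>m (n+m)"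
  proof -
    have "msum (n+m) (n+m) (map (\<lambda>M. dag M * M) ?Ks) =
       msum (n+m) (n+m) (map (\<lambda>M. dag M * M) (map (\<lambda>K. K * dag (PA n m)) KsA))
     + msum (n+m) (n+m) (map (\<lambda>M. dag M * M) (map (\<lambda>L. L * dag (PB n m)) KsB))"
      unfolding map_append using dA dB by (intro msum_append) auto
    then show ?thesis unfolding tA tB PAB_sum .
  qed
  have eq: "LA (dag (PA n m) * X * PA n m) + LB (dag (PB n m) * X * PB n m) = msum r r (map (\<lambda>M. M * X * dag M) ?Ks)"
    if X: "X \<in> carrier_mat (n+m) (n+m)" for X
  proof -
    have XA: "dag (PA n m) * X * PA n m \<in> carrier_mat n n" using X by (simp add: carrier_matD)
    have XB: "dag (PB n m) * X * PB n m \<in> carrier_mat m m" using X by (simp add: carrier_matD)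
    have "LA (dag (PA n m) * X * PA n m) = msum r r (map (\<lambda>M. M * X * dag M) (map (\<lambda>K. K * dag (PA n m)) KsA))"
      unfolding kraus_set_eq[OF KA XA] map_map comp_def
      by (rule msum_cong) (use dA X in \<open>auto simp: mat_dim_simps carrier_matD\<close>)
    moreover have "LB (dag (PB n m) * X * PB n m) = msum r r (map (\<lambda>M. M * X * dag M) (map (\<lambda>L. L * dag (PB n m)) KsB))"
      unfolding kraus_set_eq[OF KB XB] map_map comp_def
      by (rule msum_cong) (use dB X in \<open>auto simp: mat_dim_simps carrier_matD\<close>)
    moreover have "msum r r (map (\<lambda>M. M * X * dag M) ?Ks) =
       msum r r (map (\<lambda>M. M * X * dag M) (map (\<lambda>K. K * dag (PA n m)) KsA))
     + msum r r (map (\<lambda>M. M * X * dag M) (map (\<lambda>L. L * dag (PB n m)) KsB))"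
      unfolding map_append using dA dB X by (intro msum_append) (auto simp: carrier_matD)
    ultimately show ?thesis by simp
  qed
  show ?thesis unfolding kraus_set_def using car tp eq by blast
qed

lemma compl_split:
  assumes T: "\<Theta> \<in> carrier_mat (n+m) (n+m)"
    and Md: "\<forall>M\<in>set Ms. dim_row M = n+m \<and> dim_col M = n+m"
    and sA: "\<forall>M\<in>set Ms. PA n m * (dag (PA n m) * (M * PA n m)) = M * PA n m"
    and sB: "\<forall>M\<in>set Ms. PB n m * (dag (PB n m) * (M * PB n m)) = M * PB n m"
  shows "compl_chan Ms \<Theta> = compl_chan (map (\<lambda>M. dag (PA n m) * M * PA n m) Ms) (dag (PA n m) * \<Theta> * PA n m)
                          + compl_chan (map (\<lambda>M. dag (PB n m) * M * PB n m) Ms) (dag (PB n m) * \<Theta> * PB n m)"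
proof (rule eq_matI)
  let ?A = "PA n m" and ?B = "PB n m"
  have dec: "M = ?A * (dag ?A * M * ?A) * dag ?A + ?B * (dag ?B * M * ?B) * dag ?B" if M: "M \<in> set Ms" for M
  proof -
    have d: "dim_row M = n+m" "dim_col M = n+m" using Md M by auto
    have "M = M * (?A * dag ?A + ?B * dag ?B)" unfolding PAB_sum using d by simp
    also have "\<dots> = (M * ?A) * dag ?A + (M * ?B) * dag ?B" using d by (simp add: mat_dim_simps)
    also have "M * ?A = ?A * (dag ?A * M * ?A)" using sA M d by (simp add: mat_dim_simps)
    also have "M * ?B = ?B * (dag ?B * M * ?B)" using sB M d by (simp add: mat_dim_simps)
    finally show ?thesis .
  qed
  fix j j' assume j: "j < dim_row (compl_chan (map (\<lambda>M. dag (PA n m) * M * PA n m) Ms) (dag (PA n m) * \<Theta> * PA n m)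
                          + compl_chan (map (\<lambda>M. dag (PB n m) * M * PB n m) Ms) (dag (PB n m) * \<Theta> * PB n m))"
    and j': "j' < dim_col (compl_chan (map (\<lambda>M. dag (PA n m) * M * PA n m) Ms) (dag (PA n m) * \<Theta> * PA n m)
                          + compl_chan (map (\<lambda>M. dag (PB n m) * M * PB n m) Ms) (dag (PB n m) * \<Theta> * PB n m))"
  then have jl: "j < length Ms" "j' < length Ms" by auto
  define M where "M = Ms ! j"
  define M' where "M' = Ms ! j'"
  have Mi: "M \<in> set Ms" "M' \<in> set Ms" using jl by (auto simp: M_def M'_def)
  have d: "dim_row M = n+m" "dim_col M = n+m" "dim_row M' = n+m" "dim_col M' = n+m" using Md Mi by auto
  have Td: "dim_row \<Theta> = n+m" "dim_col \<Theta> = n+m" using T by auto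
  define MA where "MA = dag ?A * M * ?A"
  define MB where "MB = dag ?B * M * ?B"
  define MA' where "MA' = dag ?A * M' * ?A"
  define MB' where "MB' = dag ?B * M' * ?B"
  have dd: "dim_row MA = n" "dim_col MA = n" "dim_row MB = m" "dim_col MB = m"
    "dim_row MA' = n" "dim_col MA' = n" "dim_row MB' = m" "dim_col MB' = m"
    by (simp_all add: MA_def MB_def MA'_def MB'_def d)
  have e1: "M = ?A * MA * dag ?A + ?B * MB * dag ?B" unfolding MA_def MB_def by (rule dec[OF Mi(1)])
  have e2: "M' = ?A * MA' * dag ?A + ?B * MB' * dag ?B" unfolding MA'_def MB'_def by (rule dec[OF Mi(2)])
  have "dag M' * M = dag (?A * MA' * dag ?A + ?B * MB' * dag ?B) * (?A * MA * dag ?A + ?B * MB * dag ?B)"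
    using e1 e2 by simp
  also have "\<dots> = ?A * (dag MA' * (MA * dag ?A)) + ?B * (dag MB' * (MB * dag ?B))"
    using dd by (simp add: mat_dim_simps PA_iso_X PB_iso_X PAB_cross_X PBA_cross_X)
  finally have dMM: "dag M' * M = ?A * (dag MA' * (MA * dag ?A)) + ?B * (dag MB' * (MB * dag ?B))" .
  have "mtrace (dag M' * M * \<Theta>) = mtrace (?A * (dag MA' * (MA * (dag ?A * \<Theta>))) + ?B * (dag MB' * (MB * (dag ?B * \<Theta>))))"
    unfolding dMM using dd Td by (simp add: mat_dim_simps)
  also have "\<dots> = mtrace (?A * (dag MA' * (MA * (dag ?A * \<Theta>)))) + mtrace (?B * (dag MB' * (MB * (dag ?B * \<Theta>))))"
    using dd Td by (intro mtrace_add) (auto intro: carrier_dimI)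
  also have "mtrace (?A * (dag MA' * (MA * (dag ?A * \<Theta>)))) = mtrace ((dag MA' * (MA * (dag ?A * \<Theta>))) * ?A)"
    using dd Td by (intro mtrace_comm[of _ "n+m" n]) (auto intro: carrier_dimI)
  also have "\<dots> = mtrace (dag MA' * MA * (dag ?A * \<Theta> * ?A))"
    using dd Td by (simp add: mat_dim_simps)
  also have "mtrace (?B * (dag MB' * (MB * (dag ?B * \<Theta>)))) = mtrace ((dag MB' * (MB * (dag ?B * \<Theta>))) * ?B)"
    using dd Td by (intro mtrace_comm[of _ "n+m" m]) (auto intro: carrier_dimI)
  also have "\<dots> = mtrace (dag MB' * MB * (dag ?B * \<Theta> * ?B))"
    using dd Td by (simp add: mat_dim_simps)
  finally have tr: "mtrace (dag M' * M * \<Theta>) = mtrace (dag MA' * MA * (dag ?A * \<Theta> * ?A)) + mtrace (dag MB' * MB * (dag ?B * \<Theta> * ?B))" .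
  show "compl_chan Ms \<Theta> $$ (j, j') = (compl_chan (map (\<lambda>M. dag (PA n m) * M * PA n m) Ms) (dag (PA n m) * \<Theta> * PA n m)
                          + compl_chan (map (\<lambda>M. dag (PB n m) * M * PB n m) Ms) (dag (PB n m) * \<Theta> * PB n m)) $$ (j, j')"
    using jl tr by (simp add: compl_chan_def M_def M'_def MA_def MB_def MA'_def MB'_def)
qed auto

theorem theorem2:
  fixes n m :: nat
    and Phi PhiAA PhiAB PhiBA PhiBB :: "complex mat \<Rightarrow> complex mat"
  assumes "n > 0" and "m > 0"
    and "qchannel (n + m) (n + m) Phi"
    and "pcds n m Phi PhiAA PhiAB PhiBA PhiBB"
  shows "degradable (n + m) Phi \<longleftrightarrow> (degradable n PhiAA \<and> degradable m PhiBB)"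
proof -
  note P = assms(4)[unfolded pcds_def]
  have linAA: "lin_on n n PhiAA" and linBB: "lin_on m m PhiBB" and linAB: "lin_on n m PhiAB" and linBA: "lin_on m n PhiBA"
    using P by auto
  have cAA: "\<And>X. X \<in> carrier_mat n n \<Longrightarrow> PhiAA X \<in> carrier_mat n n" using P by auto
  have cBB: "\<And>X. X \<in> carrier_mat m m \<Longrightarrow> PhiBB X \<in> carrier_mat m m" using P by auto
  have cAB: "\<And>X. X \<in> carrier_mat n m \<Longrightarrow> PhiAB X \<in> carrier_mat n m" using P by auto
  have cBA: "\<And>X. X \<in> carrier_mat m n \<Longrightarrow> PhiBA X \<in> carrier_mat m n" using P by auto
  have BL: "\<And>TAA TAB TBA TBB. TAA \<in> carrier_mat n n \<Longrightarrow> TAB \<in> carrier_mat n m \<Longrightarrow> TBA \<in> carrier_mat m n \<Longrightarrow> TBB \<in> carrier_mat m m \<Longrightarrow>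
        Phi (four_block_mat TAA TAB TBA TBB) = four_block_mat (PhiAA TAA) (PhiAB TAB) (PhiBA TBA) (PhiBB TBB)"
    using P by blast
  have z: "PhiAA (0\<^sub>m n n) = 0\<^sub>m n n" "PhiBB (0\<^sub>m m m) = 0\<^sub>m m m" "PhiAB (0\<^sub>m n m) = 0\<^sub>m n m" "PhiBA (0\<^sub>m m n) = 0\<^sub>m m n"
    using lin_zero[OF linAA] lin_zero[OF linBB] lin_zero[OF linAB] lin_zero[OF linBA] cAA cBB cAB cBA by auto
  have commA: "Phi (PA n m * \<rho> * dag (PA n m)) = PA n m * PhiAA \<rho> * dag (PA n m)" if r: "\<rho> \<in> carrier_mat n n" for \<rho>
  proof -
    have "Phi (PA n m * \<rho> * dag (PA n m)) = Phi (four_block_mat \<rho> (0\<^sub>m n m) (0\<^sub>m m n) (0\<^sub>m m m))"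
      by (simp add: block_A[OF r])
    also have "\<dots> = four_block_mat (PhiAA \<rho>) (0\<^sub>m n m) (0\<^sub>m m n) (0\<^sub>m m m)"
      using BL[OF r] z by simp
    also have "\<dots> = PA n m * PhiAA \<rho> * dag (PA n m)" by (rule block_A[OF cAA[OF r], symmetric])
    finally show ?thesis .
  qed
  have commB: "Phi (PB n m * \<rho> * dag (PB n m)) = PB n m * PhiBB \<rho> * dag (PB n m)" if r: "\<rho> \<in> carrier_mat m m" for \<rho>
  proof -
    have "Phi (PB n m * \<rho> * dag (PB n m)) = Phi (four_block_mat (0\<^sub>m n n) (0\<^sub>m n m) (0\<^sub>m m n) \<rho>)"
      by (simp add: block_B[OF r])
    also have "\<dots> = four_block_mat (0\<^sub>m n n) (0\<^sub>m n m) (0\<^sub>m m n) (PhiBB \<rho>)"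
      using BL[OF _ _ _ r] z by simp
    also have "\<dots> = PB n m * PhiBB \<rho> * dag (PB n m)" by (rule block_B[OF cBB[OF r], symmetric])
    finally show ?thesis .
  qed
  show ?thesis
  proof
    assume deg: "degradable (n + m) Phi"
    show "degradable n PhiAA \<and> degradable m PhiBB"
      using degradable_sub[OF PA_car PA_iso cAA commA deg] degradable_sub[OF PB_car PB_iso cBB commB deg] by blast
  next
    assume "degradable n PhiAA \<and> degradable m PhiBB"
    then have dA: "degradable n PhiAA" and dB: "degradable m PhiBB" by auto
    obtain Ms where K: "kraus_set (n+m) (n+m) Phi Ms" using assms(3) unfolding qchannel_def by blast
    let ?MAs = "map (\<lambda>M. dag (PA n m) * M * PA n m) Ms"
    let ?MBs = "map (\<lambda>M. dag (PB n m) * M * PB n m) Ms"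
    have KMA: "kraus_set n n PhiAA ?MAs" by (rule sub_kraus[OF PA_car PA_iso K cAA commA])
    have KMB: "kraus_set m m PhiBB ?MBs" by (rule sub_kraus[OF PB_car PB_iso K cBB commB])
    obtain As LamA where KA: "kraus_set n n PhiAA As" and LA: "qchannel n (length As) LamA"
      and eA: "\<forall>\<theta>\<in>carrier_mat n n. compl_chan As \<theta> = LamA (PhiAA \<theta>)"
      using dA unfolding degradable_def by blast
    obtain Bs LamB where KB: "kraus_set m m PhiBB Bs" and LB: "qchannel m (length Bs) LamB"
      and eB: "\<forall>\<theta>\<in>carrier_mat m m. compl_chan Bs \<theta> = LamB (PhiBB \<theta>)"
      using dB unfolding degradable_def by blast
    obtain XA where XA: "qchannel n (length ?MAs) XA" and eXA: "\<forall>\<theta>\<in>carrier_mat n n. compl_chan ?MAs \<theta> = XA (PhiAA \<theta>)"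
      using kraus_transfer[OF assms(1) KA KMA LA eA] by blast
    obtain XB where XB: "qchannel m (length ?MBs) XB" and eXB: "\<forall>\<theta>\<in>carrier_mat m m. compl_chan ?MBs \<theta> = XB (PhiBB \<theta>)"
      using kraus_transfer[OF assms(2) KB KMB LB eB] by blast
    obtain KsA where KXA: "kraus_set n (length Ms) XA KsA" using XA unfolding qchannel_def by auto
    obtain KsB where KXB: "kraus_set m (length Ms) XB KsB" using XB unfolding qchannel_def by auto
    define Lam where "Lam = (\<lambda>X. XA (dag (PA n m) * X * PA n m) + XB (dag (PB n m) * X * PB n m))"
    have QL: "qchannel (n+m) (length Ms) Lam"
      unfolding qchannel_def Lam_def using kraus_sum[OF KXA KXB] by blast
    have Md: "\<forall>M\<in>set Ms. dim_row M = n+m \<and> dim_col M = n+m" by (rule kraus_set_dims[OF K])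
    have sA: "\<forall>M\<in>set Ms. PA n m * (dag (PA n m) * (M * PA n m)) = M * PA n m"
      using sub_block[OF PA_car PA_iso K cAA commA] by blast
    have sB: "\<forall>M\<in>set Ms. PB n m * (dag (PB n m) * (M * PB n m)) = M * PB n m"
      using sub_block[OF PB_car PB_iso K cBB commB] by blast
    have "compl_chan Ms \<Theta> = Lam (Phi \<Theta>)" if T: "\<Theta> \<in> carrier_mat (n+m) (n+m)" for \<Theta>
    proof -
      let ?A = "PA n m" and ?B = "PB n m"
      have TAA: "dag ?A * \<Theta> * ?A \<in> carrier_mat n n" and TAB: "dag ?A * \<Theta> * ?B \<in> carrier_mat n m"
        and TBA: "dag ?B * \<Theta> * ?A \<in> carrier_mat m n" and TBB: "dag ?B * \<Theta> * ?B \<in> carrier_mat m m"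
        using T by (simp_all add: carrier_matD)
      have "Phi \<Theta> = Phi (four_block_mat (dag ?A * \<Theta> * ?A) (dag ?A * \<Theta> * ?B) (dag ?B * \<Theta> * ?A) (dag ?B * \<Theta> * ?B))"
        using arg_cong[where f = Phi, OF block_decomp[OF T]] .
      also have "\<dots> = four_block_mat (PhiAA (dag ?A * \<Theta> * ?A)) (PhiAB (dag ?A * \<Theta> * ?B)) (PhiBA (dag ?B * \<Theta> * ?A)) (PhiBB (dag ?B * \<Theta> * ?B))"
        by (rule BL[OF TAA TAB TBA TBB])
      finally have PT: "Phi \<Theta> = \<dots>" .
      have "Lam (Phi \<Theta>) = XA (PhiAA (dag ?A * \<Theta> * ?A)) + XB (PhiBB (dag ?B * \<Theta> * ?B))"
        unfolding Lam_def PT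
        using block_extract_A[OF cAA[OF TAA] cBB[OF TBB] cAB[OF TAB] cBA[OF TBA]]
          block_extract_B[OF cAA[OF TAA] cBB[OF TBB] cAB[OF TAB] cBA[OF TBA]] by simp
      also have "\<dots> = compl_chan ?MAs (dag ?A * \<Theta> * ?A) + compl_chan ?MBs (dag ?B * \<Theta> * ?B)"
        using eXA TAA eXB TBB by simp
      also have "\<dots> = compl_chan Ms \<Theta>" by (rule compl_split[OF T Md sA sB, symmetric])
      finally show ?thesis by simp
    qed
    then show "degradable (n + m) Phi" unfolding degradable_def using K QL by blast
  qed
qed

end
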